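(* Let $R\in M_d\otimes M_d$ be a solution of the QYBE which is superizable with respect to a grading $p:\{1,\dots,d\}\to\{0,1\}$, and let $\underline R^a{}_c{}^b{}_d=(-1)^{p(a)p(b)}R^a{}_c{}^b{}_d$. Let $A(R)\rtimes\mathbb Z_2$ be the extension of the FRT bialgebra $A(R)$ by an element $g$ with $g^2=1$, $\Delta g=g\otimes g$ and $g\,t^i{}_j=(-1)^{p(i)+p(j)}t^i{}_j\,g$. Then $A(R)\rtimes\mathbb Z_2$ is an ordinary bialgebra, and its superization (with respect to $g$) is isomorphic, as a super-bialgebra, to $A(\underline R)\rtimes\mathbb Z_2$, the $\mathbb Z_2$-extension of the super FRT bialgebra associated to $\underline R$.
   Context: $R$ has entries $R^a{}_c{}^b{}_d$; it is superizable if $R^a{}_c{}^b{}_d=0$ whenever $p(a)+p(b)-p(c)-p(d)\not\equiv0\pmod2$. Repeated indices are summed. The FRT bialgebra $A(R)$ is generated by $1$ and $t^i{}_j$ ($1\le i,j\le d$) with relations $R^a{}_f{}^b{}_e\,t^f{}_c\,t^e{}_d=t^b{}_r\,t^a{}_s\,R^s{}_c{}^r{}_d$, coproduct $\Delta t^i{}_j=\sum_k t^i{}_k\otimes t^k{}_j$, counit $\varepsilon(t^i{}_j)=\delta^i_j$. The super FRT bialgebra $A(\underline R)$ is generated by $1$ and $u^i{}_j$ of degree $p(i)+p(j)$ with relations $(-1)^{p(a)p(b)+p(c)p(e)}\underline R^a{}_f{}^b{}_e\,u^f{}_c\,u^e{}_d=(-1)^{p(c)p(d)+p(r)p(a)}u^b{}_r\,u^a{}_s\,\underline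 R^s{}_c{}^r{}_d$, super-coproduct $\underline\Delta u^i{}_j=\sum_ku^i{}_k\otimes u^k{}_j$ (graded tensor product $(x\otimes y)(z\otimes w)=(-1)^{\deg y\deg z}xz\otimes yw$), counit $\delta^i_j$; its $\mathbb Z_2$-extension adjoins an even $g$ with $g^2=1$, $\underline\Delta g=g\otimes g$, $g\,u^i{}_j=(-1)^{p(i)+p(j)}u^i{}_j\,g$. Superization of a bialgebra $H$ with group-like $g$, $g^2=1$: grade by $ghg^{-1}=(-1)^{\deg h}h$, keep the algebra and counit, and replace the coproduct by $\underline\Delta h=\sum h_{(1)}g^{-\deg h_{(2)}}\otimes h_{(2)}$. *)

theory Defs
  imports Main "HOL-Library.Poly_Mapping"
begin

text \<open>Generators of A(R) semidirect Z2: t^i_j (written T i j) and g (written G).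
  For the super FRT bialgebra the generators u^i_j are also written T i j.\<close>
datatype gen = T nat nat | G

text \<open>Free (noncommutative, unital, associative) algebra over the field 'k on gen:
  finitely supported functions on words.\<close>
type_synonym 'k fa = "gen list \<Rightarrow>\<^sub>0 'k"

text \<open>Tensor square of the free algebra: basis = pairs of words.\<close>
type_synonym 'k fa2 = "(gen list \<times> gen list) \<Rightarrow>\<^sub>0 'k"

definition scal :: "'k::field \<Rightarrow> ('a \<Rightarrow>\<^sub>0 'k) \<Rightarrow> ('a \<Rightarrow>\<^sub>0 'k)" where
  "scal c x = Poly_Mapping.map (\<lambda>y. c * y) x"

definition word :: "gen list \<Rightarrow> 'k::field fa" where
  "word w = Poly_Mapping.single w 1"

definition gn :: "gen \<Rightarrow> 'k::field fa" where
  "gn x = word [x]"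

definition fone :: "'k::field fa" where
  "fone = word []"

definition fmul :: "'k::field fa \<Rightarrow> 'k fa \<Rightarrow> 'k fa" where
  "fmul x y = (\<Sum>(u,v)\<in>Poly_Mapping.keys x \<times> Poly_Mapping.keys y.
      Poly_Mapping.single (u @ v) (Poly_Mapping.lookup x u * Poly_Mapping.lookup y v))"

definition tens :: "'k::field fa \<Rightarrow> 'k fa \<Rightarrow> 'k fa2" where
  "tens x y = (\<Sum>(u,v)\<in>Poly_Mapping.keys x \<times> Poly_Mapping.keys y.
      Poly_Mapping.single (u, v) (Poly_Mapping.lookup x u * Poly_Mapping.lookup y v))"

text \<open>The grading p takes values in {0,1}; degrees are taken mod 2.\<close>
fun deg_gen :: "(nat \<Rightarrow> nat) \<Rightarrow> gen \<Rightarrow> nat" where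
  "deg_gen p (T i j) = (p i + p j) mod 2"
| "deg_gen p G = 0"

definition deg_word :: "(nat \<Rightarrow> nat) \<Rightarrow> gen list \<Rightarrow> nat" where
  "deg_word p w = (\<Sum>x\<leftarrow>w. deg_gen p x) mod 2"

definition homogeneous :: "(nat \<Rightarrow> nat) \<Rightarrow> nat \<Rightarrow> 'k::field fa \<Rightarrow> bool" where
  "homogeneous p e x \<longleftrightarrow> (\<forall>w\<in>Poly_Mapping.keys x. deg_word p w = e)"

definition sgn :: "nat \<Rightarrow> 'k::field" where
  "sgn m = (-1) ^ m"

definition tmul :: "'k::field fa2 \<Rightarrow> 'k fa2 \<Rightarrow> 'k fa2" where
  "tmul x y = (\<Sum>((u,v),(u',v'))\<in>Poly_Mapping.keys x \<times> Poly_Mapping.keys y.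
      Poly_Mapping.single (u @ u', v @ v') (Poly_Mapping.lookup x (u,v) * Poly_Mapping.lookup y (u',v')))"

definition stmul :: "(nat \<Rightarrow> nat) \<Rightarrow> 'k::field fa2 \<Rightarrow> 'k fa2 \<Rightarrow> 'k fa2" where
  "stmul p x y = (\<Sum>((u,v),(u',v'))\<in>Poly_Mapping.keys x \<times> Poly_Mapping.keys y.
      Poly_Mapping.single (u @ u', v @ v')
        (sgn (deg_word p v * deg_word p u') * Poly_Mapping.lookup x (u,v) * Poly_Mapping.lookup y (u',v')))"

definition word_eval :: "('b \<Rightarrow> 'b \<Rightarrow> 'b) \<Rightarrow> 'b \<Rightarrow> (gen \<Rightarrow> 'b) \<Rightarrow> gen list \<Rightarrow> 'b" where
  "word_eval mul one h w = foldr (\<lambda>x acc. mul (h x) acc) w one"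

definition alg_ext :: "(gen \<Rightarrow> 'k::field fa) \<Rightarrow> 'k fa \<Rightarrow> 'k fa" where
  "alg_ext h x = (\<Sum>w\<in>Poly_Mapping.keys x. scal (Poly_Mapping.lookup x w) (word_eval fmul fone h w))"

definition alg_ext_k :: "(gen \<Rightarrow> 'k::field) \<Rightarrow> 'k fa \<Rightarrow> 'k" where
  "alg_ext_k h x = (\<Sum>w\<in>Poly_Mapping.keys x. Poly_Mapping.lookup x w * word_eval (*) 1 h w)"

definition alg_ext2 :: "('k::field fa2 \<Rightarrow> 'k fa2 \<Rightarrow> 'k fa2) \<Rightarrow> (gen \<Rightarrow> 'k fa2) \<Rightarrow> 'k fa \<Rightarrow> 'k fa2" where
  "alg_ext2 mul h x = (\<Sum>w\<in>Poly_Mapping.keys x. scal (Poly_Mapping.lookup x w)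
       (word_eval mul (Poly_Mapping.single ([],[]) 1) h w))"

definition tens_map :: "('k::field fa \<Rightarrow> 'k fa) \<Rightarrow> 'k fa2 \<Rightarrow> 'k fa2" where
  "tens_map f x = (\<Sum>(u,v)\<in>Poly_Mapping.keys x. scal (Poly_Mapping.lookup x (u,v)) (tens (f (word u)) (f (word v))))"

inductive_set ideal_gen :: "'k::field fa set \<Rightarrow> 'k fa set" for S where
  zero: "0 \<in> ideal_gen S"
| gen: "r \<in> S \<Longrightarrow> fmul (fmul a r) b \<in> ideal_gen S"
| add: "x \<in> ideal_gen S \<Longrightarrow> y \<in> ideal_gen S \<Longrightarrow> x + y \<in> ideal_gen S"

inductive_set tens_ideal :: "'k::field fa set \<Rightarrow> 'k fa2 set" for I where
  zero: "0 \<in> tens_ideal I"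
| left: "x \<in> I \<Longrightarrow> tens x b \<in> tens_ideal I"
| right: "x \<in> I \<Longrightarrow> tens a x \<in> tens_ideal I"
| add: "x \<in> tens_ideal I \<Longrightarrow> y \<in> tens_ideal I \<Longrightarrow> x + y \<in> tens_ideal I"

text \<open>R a c b d stands for R^a_c^b_d; indices range over {1..n}.\<close>
definition QYBE :: "nat \<Rightarrow> (nat \<Rightarrow> nat \<Rightarrow> nat \<Rightarrow> nat \<Rightarrow> 'k::field) \<Rightarrow> bool" where
  "QYBE n R \<longleftrightarrow> (\<forall>a\<in>{1..n}. \<forall>b\<in>{1..n}. \<forall>c\<in>{1..n}. \<forall>a'\<in>{1..n}. \<forall>b'\<in>{1..n}. \<forall>c'\<in>{1..n}.
     (\<Sum>x\<in>{1..n}. \<Sum>y\<in>{1..n}. \<Sum>z\<in>{1..n}. R a x b y * R x a' c z * R y b' z c')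
   = (\<Sum>x\<in>{1..n}. \<Sum>y\<in>{1..n}. \<Sum>z\<in>{1..n}. R b y c z * R a x z c' * R x a' y b'))"

definition superizable :: "nat \<Rightarrow> (nat \<Rightarrow> nat) \<Rightarrow> (nat \<Rightarrow> nat \<Rightarrow> nat \<Rightarrow> nat \<Rightarrow> 'k::field) \<Rightarrow> bool" where
  "superizable n p R \<longleftrightarrow> (\<forall>a\<in>{1..n}. \<forall>b\<in>{1..n}. \<forall>c\<in>{1..n}. \<forall>d\<in>{1..n}.
     odd (p a + p b + p c + p d) \<longrightarrow> R a c b d = 0)"

definition Rsuper :: "(nat \<Rightarrow> nat) \<Rightarrow> (nat \<Rightarrow> nat \<Rightarrow> nat \<Rightarrow> nat \<Rightarrow> 'k::field)
    \<Rightarrow> nat \<Rightarrow> nat \<Rightarrow> nat \<Rightarrow> nat \<Rightarrow> 'k" where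
  "Rsuper p R a c b d = sgn (p a * p b) * R a c b d"

definition FRT_rel :: "nat \<Rightarrow> (nat \<Rightarrow> nat \<Rightarrow> nat \<Rightarrow> nat \<Rightarrow> 'k::field) \<Rightarrow> nat \<Rightarrow> nat \<Rightarrow> nat \<Rightarrow> nat \<Rightarrow> 'k fa" where
  "FRT_rel n R a b c d =
     (\<Sum>f\<in>{1..n}. \<Sum>e\<in>{1..n}. scal (R a f b e) (fmul (gn (T f c)) (gn (T e d))))
   - (\<Sum>r\<in>{1..n}. \<Sum>s\<in>{1..n}. scal (R s c r d) (fmul (gn (T b r)) (gn (T a s))))"

text \<open>Generators T i j with indices outside {1..n} are not generators of the algebra:
  they are set to zero (and have zero coproduct and counit).\<close>
definition Z2_rels :: "nat \<Rightarrow> (nat \<Rightarrow> nat) \<Rightarrow> 'k::field fa set" where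
  "Z2_rels n p = {fmul (gn G) (gn G) - fone} \<union>
     {gn (T i j) | i j. \<not> (i \<in> {1..n} \<and> j \<in> {1..n})} \<union>
     {fmul (gn G) (gn (T i j)) - scal (sgn (p i + p j)) (fmul (gn (T i j)) (gn G)) | i j.
        i \<in> {1..n} \<and> j \<in> {1..n}}"

definition AR_Z2_rels :: "nat \<Rightarrow> (nat \<Rightarrow> nat) \<Rightarrow> (nat \<Rightarrow> nat \<Rightarrow> nat \<Rightarrow> nat \<Rightarrow> 'k::field) \<Rightarrow> 'k fa set" where
  "AR_Z2_rels n p R = {FRT_rel n R a b c d | a b c d.
       a \<in> {1..n} \<and> b \<in> {1..n} \<and> c \<in> {1..n} \<and> d \<in> {1..n}} \<union> Z2_rels n p"

text \<open>Coproduct and counit on generators (same formulas for A(R) and A(R-underline)).\<close>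
definition cop_gen :: "nat \<Rightarrow> gen \<Rightarrow> 'k::field fa2" where
  "cop_gen n x = (case x of
      T i j \<Rightarrow> (if i \<in> {1..n} \<and> j \<in> {1..n}
                 then (\<Sum>k\<in>{1..n}. tens (gn (T i k)) (gn (T k j))) else 0)
    | G \<Rightarrow> tens (gn G) (gn G))"

definition counit_gen :: "nat \<Rightarrow> gen \<Rightarrow> 'k::field" where
  "counit_gen n x = (case x of T i j \<Rightarrow> (if i = j \<and> i \<in> {1..n} then 1 else 0) | G \<Rightarrow> 1)"

definition cop :: "nat \<Rightarrow> 'k::field fa \<Rightarrow> 'k fa2" where
  "cop n = alg_ext2 tmul (cop_gen n)"

definition counit :: "nat \<Rightarrow> 'k::field fa \<Rightarrow> 'k" where
  "counit n = alg_ext_k (counit_gen n)"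

text \<open>Superization: replace h_(1) \<otimes> h_(2) by h_(1) g^(-deg h_(2)) \<otimes> h_(2) (g^(-1) = g).\<close>
definition superize_map :: "(nat \<Rightarrow> nat) \<Rightarrow> 'k::field fa2 \<Rightarrow> 'k fa2" where
  "superize_map p x = (\<Sum>(u,v)\<in>Poly_Mapping.keys x.
      Poly_Mapping.single (u @ replicate (deg_word p v) G, v) (Poly_Mapping.lookup x (u,v)))"

definition cop_superized :: "nat \<Rightarrow> (nat \<Rightarrow> nat) \<Rightarrow> 'k::field fa \<Rightarrow> 'k fa2" where
  "cop_superized n p x = superize_map p (cop n x)"

definition superFRT_rel :: "nat \<Rightarrow> (nat \<Rightarrow> nat) \<Rightarrow> (nat \<Rightarrow> nat \<Rightarrow> nat \<Rightarrow> nat \<Rightarrow> 'k::field)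
    \<Rightarrow> nat \<Rightarrow> nat \<Rightarrow> nat \<Rightarrow> nat \<Rightarrow> 'k fa" where
  "superFRT_rel n p Ru a b c d =
     (\<Sum>f\<in>{1..n}. \<Sum>e\<in>{1..n}. scal (sgn (p a * p b + p c * p e) * Ru a f b e)
          (fmul (gn (T f c)) (gn (T e d))))
   - (\<Sum>r\<in>{1..n}. \<Sum>s\<in>{1..n}. scal (sgn (p c * p d + p r * p a) * Ru s c r d)
          (fmul (gn (T b r)) (gn (T a s))))"

definition superAR_Z2_rels :: "nat \<Rightarrow> (nat \<Rightarrow> nat) \<Rightarrow> (nat \<Rightarrow> nat \<Rightarrow> nat \<Rightarrow> nat \<Rightarrow> 'k::field) \<Rightarrow> 'k fa set" where
  "superAR_Z2_rels n p Ru = {superFRT_rel n p Ru a b c d | a b c d.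
       a \<in> {1..n} \<and> b \<in> {1..n} \<and> c \<in> {1..n} \<and> d \<in> {1..n}} \<union> Z2_rels n p"

definition scop :: "nat \<Rightarrow> (nat \<Rightarrow> nat) \<Rightarrow> 'k::field fa \<Rightarrow> 'k fa2" where
  "scop n p = alg_ext2 (stmul p) (cop_gen n)"

text \<open>F/I is an (ordinary) bialgebra with the coproduct and counit induced from the
  generator data: I is a bialgebra ideal (coproduct and counit descend).\<close>
definition is_bialgebra_presented :: "nat \<Rightarrow> 'k::field fa set \<Rightarrow> bool" where
  "is_bialgebra_presented n I \<longleftrightarrow>
     (\<forall>x\<in>I. cop n x \<in> tens_ideal I \<and> counit n x = 0)"

definition is_super_bialgebra_presented :: "nat \<Rightarrow> (nat \<Rightarrow> nat) \<Rightarrow> 'k::field fa set \<Rightarrow> bool" where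
  "is_super_bialgebra_presented n p J \<longleftrightarrow>
     (\<forall>x\<in>J. scop n p x \<in> tens_ideal J \<and> counit n x = 0)"

text \<open>Isomorphism of super-bialgebras from the superization of F/I (coproduct
  cop_superized) to F/J (coproduct scop): an algebra map given on generators by phi0
  (every algebra map F/I \<rightarrow> F/J lifts to such), well defined, bijective (inverse
  given on generators by psi0), degree preserving, and compatible with coproducts
  and counits.\<close>
definition super_bialg_iso :: "nat \<Rightarrow> (nat \<Rightarrow> nat) \<Rightarrow> 'k::field fa set \<Rightarrow> 'k fa set
    \<Rightarrow> (gen \<Rightarrow> 'k fa) \<Rightarrow> bool" where
  "super_bialg_iso n p I J phi0 \<longleftrightarrow>
     (let phi = alg_ext phi0 in
       (\<forall>x\<in>I. phi x \<in> J)
     \<and> (\<exists>psi0. let psi = alg_ext psi0 in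
          (\<forall>y\<in>J. psi y \<in> I) \<and> (\<forall>x. psi (phi x) - x \<in> I) \<and> (\<forall>y. phi (psi y) - y \<in> J))
     \<and> (\<forall>w. \<exists>v. homogeneous p (deg_word p w) v \<and> phi (word w) - v \<in> J)
     \<and> (\<forall>x. tens_map phi (cop_superized n p x) - scop n p (phi x) \<in> tens_ideal J)
     \<and> (\<forall>x. counit n (phi x) = counit n x))"

end

theory Submission
  imports Defs
begin

section \<open>Generic bilinear maps and linear extensions\<close>

definition bil :: "('a \<Rightarrow> 'b \<Rightarrow> 'c) \<Rightarrow> ('a \<Rightarrow> 'b \<Rightarrow> 'k::field) \<Rightarrow> ('a \<Rightarrow>\<^sub>0 'k) \<Rightarrow> ('b \<Rightarrow>\<^sub>0 'k) \<Rightarrow> ('c \<Rightarrow>\<^sub>0 'k)" where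
  "bil f s x y = (\<Sum>(a,b)\<in>Poly_Mapping.keys x \<times> Poly_Mapping.keys y.
      Poly_Mapping.single (f a b) (s a b * Poly_Mapping.lookup x a * Poly_Mapping.lookup y b))"

definition lin :: "('a \<Rightarrow> ('b \<Rightarrow>\<^sub>0 'k::field)) \<Rightarrow> ('a \<Rightarrow>\<^sub>0 'k) \<Rightarrow> ('b \<Rightarrow>\<^sub>0 'k)" where
  "lin E x = (\<Sum>w\<in>Poly_Mapping.keys x. scal (Poly_Mapping.lookup x w) (E w))"

lemma lookup_scal [simp]: "Poly_Mapping.lookup (scal c x) w = c * Poly_Mapping.lookup x w"
  unfolding scal_def Poly_Mapping.map.rep_eq by (cases "Poly_Mapping.lookup x w = 0") auto


lemma scal_add2: "scal c (x + y) = scal c x + scal c y"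
  by (rule poly_mapping_eqI) (simp add: lookup_add algebra_simps)
lemma scal_add1: "scal (c + d) x = scal c x + scal d x"
  by (rule poly_mapping_eqI) (simp add: lookup_add algebra_simps)
lemma scal_zero2 [simp]: "scal c 0 = 0"
  by (rule poly_mapping_eqI) simp
lemma scal_zero1 [simp]: "scal 0 x = 0"
  by (rule poly_mapping_eqI) simp
lemma scal_one [simp]: "scal 1 x = x"
  by (rule poly_mapping_eqI) simp
lemma scal_scal [simp]: "scal c (scal d x) = scal (c * d) x"
  by (rule poly_mapping_eqI) simp
lemma scal_single [simp]: "scal c (Poly_Mapping.single k d) = Poly_Mapping.single k (c * d)"
  by (rule poly_mapping_eqI) (simp add: lookup_single when_def)
lemma scal_minus2: "scal c (x - y) = scal c x - scal c y"
  by (rule poly_mapping_eqI) (simp add: lookup_minus algebra_simps)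
lemma scal_minus1: "scal (c - d) x = scal c x - scal d x"
  by (rule poly_mapping_eqI) (simp add: lookup_minus algebra_simps)
lemma scal_uminus2: "scal c (- x) = - scal c x"
  by (rule poly_mapping_eqI) (simp)
lemma scal_uminus1: "scal (- c) x = - scal c x"
  by (rule poly_mapping_eqI) (simp)
lemma scal_sum2: "scal c (sum f A) = (\<Sum>i\<in>A. scal c (f i))"
  by (rule poly_mapping_eqI) (simp add: lookup_sum sum_distrib_left)
lemma scal_sum1: "scal (sum f A) x = (\<Sum>i\<in>A. scal (f i) x)"
  by (rule poly_mapping_eqI) (simp add: lookup_sum sum_distrib_right)
lemma keys_scal: "Poly_Mapping.keys (scal c x) \<subseteq> Poly_Mapping.keys x"
  by (auto simp: in_keys_iff)

lemma pm_expand: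
  assumes "finite A" "Poly_Mapping.keys x \<subseteq> A"
  shows "x = (\<Sum>a\<in>A. Poly_Mapping.single a (Poly_Mapping.lookup x a))"
proof (rule poly_mapping_eqI)
  fix k
  show "Poly_Mapping.lookup x k = Poly_Mapping.lookup (\<Sum>a\<in>A. Poly_Mapping.single a (Poly_Mapping.lookup x a)) k"
    using assms by (auto simp: lookup_sum lookup_single when_def in_keys_iff)
qed

lemma pm_expand_keys: "x = (\<Sum>a\<in>Poly_Mapping.keys x. Poly_Mapping.single a (Poly_Mapping.lookup x a))"
  by (rule pm_expand) auto

lemma bil_superset:
  assumes "finite A" "Poly_Mapping.keys x \<subseteq> A" "finite B" "Poly_Mapping.keys y \<subseteq> B"
  shows "bil f s x y = (\<Sum>a\<in>A. \<Sum>b\<in>B.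
      Poly_Mapping.single (f a b) (s a b * Poly_Mapping.lookup x a * Poly_Mapping.lookup y b))"
proof -
  have "bil f s x y = (\<Sum>(a,b)\<in>A \<times> B.
      Poly_Mapping.single (f a b) (s a b * Poly_Mapping.lookup x a * Poly_Mapping.lookup y b))"
    unfolding bil_def
    by (rule sum.mono_neutral_left) (use assms in \<open>auto simp: in_keys_iff\<close>)
  then show ?thesis by (simp add: sum.cartesian_product)
qed

lemma lin_superset:
  assumes "finite A" "Poly_Mapping.keys x \<subseteq> A"
  shows "lin E x = (\<Sum>a\<in>A. scal (Poly_Mapping.lookup x a) (E a))"
  unfolding lin_def
  by (rule sum.mono_neutral_left) (use assms in \<open>auto simp: in_keys_iff\<close>)

lemma bil_add1: "bil f s (x + x') y = bil f s x y + bil f s x' y"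
proof -
  let ?A = "Poly_Mapping.keys x \<union> Poly_Mapping.keys x' \<union> Poly_Mapping.keys (x + x')"
  have "bil f s (x + x') y = (\<Sum>a\<in>?A. \<Sum>b\<in>Poly_Mapping.keys y.
      Poly_Mapping.single (f a b) (s a b * Poly_Mapping.lookup (x + x') a * Poly_Mapping.lookup y b))"
    by (rule bil_superset) auto
  also have "\<dots> = (\<Sum>a\<in>?A. \<Sum>b\<in>Poly_Mapping.keys y.
      Poly_Mapping.single (f a b) (s a b * Poly_Mapping.lookup x a * Poly_Mapping.lookup y b))
    + (\<Sum>a\<in>?A. \<Sum>b\<in>Poly_Mapping.keys y.
      Poly_Mapping.single (f a b) (s a b * Poly_Mapping.lookup x' a * Poly_Mapping.lookup y b))"
    by (simp add: lookup_add algebra_simps single_add sum.distrib)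
  also have "\<dots> = bil f s x y + bil f s x' y"
    by (subst (1 2) bil_superset[where A="?A" and B="Poly_Mapping.keys y"]) auto
  finally show ?thesis by simp
qed

lemma bil_add2: "bil f s x (y + y') = bil f s x y + bil f s x y'"
proof -
  let ?B = "Poly_Mapping.keys y \<union> Poly_Mapping.keys y' \<union> Poly_Mapping.keys (y + y')"
  have "bil f s x (y + y') = (\<Sum>a\<in>Poly_Mapping.keys x. \<Sum>b\<in>?B.
      Poly_Mapping.single (f a b) (s a b * Poly_Mapping.lookup x a * Poly_Mapping.lookup (y + y') b))"
    by (rule bil_superset) auto
  also have "\<dots> = (\<Sum>a\<in>Poly_Mapping.keys x. \<Sum>b\<in>?B.
      Poly_Mapping.single (f a b) (s a b * Poly_Mapping.lookup x a * Poly_Mapping.lookup y b))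
    + (\<Sum>a\<in>Poly_Mapping.keys x. \<Sum>b\<in>?B.
      Poly_Mapping.single (f a b) (s a b * Poly_Mapping.lookup x a * Poly_Mapping.lookup y' b))"
    by (simp add: lookup_add algebra_simps single_add sum.distrib)
  also have "\<dots> = bil f s x y + bil f s x y'"
    by (subst (1 2) bil_superset[where B="?B" and A="Poly_Mapping.keys x"]) auto
  finally show ?thesis by simp
qed

lemma bil_zero1 [simp]: "bil f s 0 y = 0"
  by (simp add: bil_def)
lemma bil_zero2 [simp]: "bil f s x 0 = 0"
  by (simp add: bil_def)

lemma bil_scal1: "bil f s (scal c x) y = scal c (bil f s x y)"
proof -
  have "bil f s (scal c x) y = (\<Sum>a\<in>Poly_Mapping.keys x. \<Sum>b\<in>Poly_Mapping.keys y.
      Poly_Mapping.single (f a b) (s a b * Poly_Mapping.lookup (scal c x) a * Poly_Mapping.lookup y b))"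
    by (rule bil_superset) (auto simp: in_keys_iff)
  also have "\<dots> = scal c (bil f s x y)"
    by (subst bil_superset[where A="Poly_Mapping.keys x" and B="Poly_Mapping.keys y"])
       (auto simp: scal_sum2 algebra_simps)
  finally show ?thesis .
qed

lemma bil_scal2: "bil f s x (scal c y) = scal c (bil f s x y)"
proof -
  have "bil f s x (scal c y) = (\<Sum>a\<in>Poly_Mapping.keys x. \<Sum>b\<in>Poly_Mapping.keys y.
      Poly_Mapping.single (f a b) (s a b * Poly_Mapping.lookup x a * Poly_Mapping.lookup (scal c y) b))"
    by (rule bil_superset) (auto simp: in_keys_iff)
  also have "\<dots> = scal c (bil f s x y)"
    by (subst bil_superset[where A="Poly_Mapping.keys x" and B="Poly_Mapping.keys y"])
       (auto simp: scal_sum2 algebra_simps)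
  finally show ?thesis .
qed

lemma bil_minus1: "bil f s (x - x') y = bil f s x y - bil f s x' y"
  by (metis add_diff_cancel bil_add1 diff_add_cancel)
lemma bil_minus2: "bil f s x (y - y') = bil f s x y - bil f s x y'"
  by (metis add_diff_cancel bil_add2 diff_add_cancel)

lemma bil_uminus1: "bil f s (- x) y = - bil f s x y"
  using bil_minus1[of f s 0 x y] by simp
lemma bil_uminus2: "bil f s x (- y) = - bil f s x y"
  using bil_minus2[of f s x 0 y] by simp

lemma bil_sum1: "bil f s (sum g I) y = (\<Sum>i\<in>I. bil f s (g i) y)"
  by (induction I rule: infinite_finite_induct) (auto simp: bil_add1)
lemma bil_sum2: "bil f s x (sum g I) = (\<Sum>i\<in>I. bil f s x (g i))"
  by (induction I rule: infinite_finite_induct) (auto simp: bil_add2)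

lemma bil_single: "bil f s (Poly_Mapping.single a c) (Poly_Mapping.single b d)
   = Poly_Mapping.single (f a b) (s a b * c * d)"
  by (subst bil_superset[where A="{a}" and B="{b}"]) auto

lemma bil_single1: "bil f s (Poly_Mapping.single a v) y
   = (\<Sum>b\<in>Poly_Mapping.keys y. Poly_Mapping.single (f a b) (s a b * v * Poly_Mapping.lookup y b))"
  by (subst bil_superset[where A="{a}" and B="Poly_Mapping.keys y"]) auto

lemma bil_single2: "bil f s x (Poly_Mapping.single b v)
   = (\<Sum>a\<in>Poly_Mapping.keys x. Poly_Mapping.single (f a b) (s a b * Poly_Mapping.lookup x a * v))"
  by (subst bil_superset[where B="{b}" and A="Poly_Mapping.keys x"]) auto

lemma bil_assoc:
  assumes F: "\<And>a b c. F2 (F1 a b) c = F4 a (F3 b c)"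
    and S: "\<And>a b c. s1 a b * s2 (F1 a b) c = s3 b c * s4 a (F3 b c)"
  shows "bil F2 s2 (bil F1 s1 x y) z = bil F4 s4 x (bil F3 s3 y z)"
proof -
  let ?X = "Poly_Mapping.keys x" and ?Y = "Poly_Mapping.keys y" and ?Z = "Poly_Mapping.keys z"
  have "bil F2 s2 (bil F1 s1 x y) z = (\<Sum>a\<in>?X. \<Sum>b\<in>?Y. \<Sum>c\<in>?Z.
     Poly_Mapping.single (F2 (F1 a b) c) (s2 (F1 a b) c * (s1 a b * Poly_Mapping.lookup x a * Poly_Mapping.lookup y b) * Poly_Mapping.lookup z c))"
    by (simp only: bil_superset[where A="?X" and B="?Y" and x=x and y=y, OF finite_keys order.refl finite_keys order.refl] bil_sum1 bil_single1)
  also have "\<dots> = (\<Sum>a\<in>?X. \<Sum>b\<in>?Y. \<Sum>c\<in>?Z.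
     Poly_Mapping.single (F4 a (F3 b c)) (s4 a (F3 b c) * Poly_Mapping.lookup x a * (s3 b c * Poly_Mapping.lookup y b * Poly_Mapping.lookup z c)))"
  proof -
    have eq: "s2 (F1 a b) c * (s1 a b * X * Y) * Z = s4 a (F3 b c) * X * (s3 b c * Y * Z)" for a b c X Y Z
    proof -
      have "s2 (F1 a b) c * (s1 a b * X * Y) * Z = (s1 a b * s2 (F1 a b) c) * (X * Y * Z)" by (simp only: mult_ac)
      also have "\<dots> = (s3 b c * s4 a (F3 b c)) * (X * Y * Z)" by (simp only: S)
      also have "\<dots> = s4 a (F3 b c) * X * (s3 b c * Y * Z)" by (simp only: mult_ac)
      finally show ?thesis .
    qed
    show ?thesis by (simp only: F eq)
  qed
  also have "\<dots> = (\<Sum>b\<in>?Y. \<Sum>c\<in>?Z. \<Sum>a\<in>?X.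
     Poly_Mapping.single (F4 a (F3 b c)) (s4 a (F3 b c) * Poly_Mapping.lookup x a * (s3 b c * Poly_Mapping.lookup y b * Poly_Mapping.lookup z c)))"
    by (subst sum.swap) (rule sum.cong[OF refl], rule sum.swap)
  also have "\<dots> = bil F4 s4 x (bil F3 s3 y z)"
    by (simp only: bil_superset[where A="?Y" and B="?Z" and x=y and y=z, OF finite_keys order.refl finite_keys order.refl] bil_sum2 bil_single2)
  finally show ?thesis .
qed

lemma bil_unit1:
  assumes "\<And>b. f e b = b" "\<And>b. s e b = 1"
  shows "bil f s (Poly_Mapping.single e 1) y = y"
  by (simp add: bil_single1 assms) (rule pm_expand_keys[symmetric])

lemma bil_unit2:
  assumes "\<And>b. f b e = b" "\<And>b. s b e = 1"
  shows "bil f s y (Poly_Mapping.single e 1) = y"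
  by (simp add: bil_single2 assms) (rule pm_expand_keys[symmetric])

lemma lin_add: "lin E (x + y) = lin E x + lin E y"
proof -
  let ?A = "Poly_Mapping.keys x \<union> Poly_Mapping.keys y \<union> Poly_Mapping.keys (x + y)"
  show ?thesis
    by (subst (1 2 3) lin_superset[where A="?A"]) (auto simp: lookup_add scal_add1 sum.distrib)
qed

lemma lin_zero [simp]: "lin E 0 = 0"
  by (simp add: lin_def)

lemma lin_scal: "lin E (scal c x) = scal c (lin E x)"
  by (subst (1 2) lin_superset[where A="Poly_Mapping.keys x"]) (auto simp: scal_sum2 in_keys_iff)

lemma lin_minus: "lin E (x - y) = lin E x - lin E y"
  by (metis add_diff_cancel diff_add_cancel lin_add)

lemma lin_sum: "lin E (sum g I) = (\<Sum>i\<in>I. lin E (g i))"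
  by (induction I rule: infinite_finite_induct) (auto simp: lin_add)

lemma lin_single [simp]: "lin E (Poly_Mapping.single a c) = scal c (E a)"
  by (subst lin_superset[where A="{a}"]) auto

lemma lin_compose: "lin E (lin E' x) = lin (\<lambda>a. lin E (E' a)) x"
  by (simp add: lin_def[of E'] lin_sum lin_scal) (simp add: lin_def)

lemma lin_id: "lin (\<lambda>a. Poly_Mapping.single a 1) x = x"
  by (simp add: lin_def) (rule pm_expand_keys[symmetric])

lemma lin_cong: "(\<And>a. a \<in> Poly_Mapping.keys x \<Longrightarrow> E a = E' a) \<Longrightarrow> lin E x = lin E' x"
  by (simp add: lin_def)


lemma sgn_add: "(sgn (a + b) :: 'k::field) = sgn a * sgn b"
  by (simp add: sgn_def power_add)

lemma sgn_0 [simp]: "sgn 0 = 1"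
  by (simp add: sgn_def)

lemma sgn_parity: "even a = even b \<Longrightarrow> (sgn a :: 'k::field) = sgn b"
  by (cases "even a") (auto simp: sgn_def)

lemma sgn_sq: "(sgn a :: 'k::field) * sgn a = 1"
  by (simp add: sgn_def flip: power_add)

lemma sgn_mod2: "(sgn (a mod 2) :: 'k::field) = sgn a"
  by (rule sgn_parity) simp

lemma sgn_nonzero [simp]: "(sgn a :: 'k::field) \<noteq> 0"
  by (simp add: sgn_def)

lemma deg_word_Nil [simp]: "deg_word q [] = 0"
  by (simp add: deg_word_def)

lemma deg_word_Cons: "deg_word q (x # w) = (deg_gen q x + deg_word q w) mod 2"
  by (simp add: deg_word_def mod_add_right_eq)

lemma deg_word_append: "deg_word q (u @ v) = (deg_word q u + deg_word q v) mod 2"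
  by (simp add: deg_word_def mod_add_eq)

lemma deg_word_G [simp]: "deg_word q (replicate m G) = 0"
  by (induction m) (auto simp: deg_word_Cons)

lemma deg_word_G_Cons [simp]: "deg_word q (G # w) = deg_word q w"
  by (simp add: deg_word_Cons deg_word_def)

lemma deg_word_lt2: "deg_word q w < 2"
  by (simp add: deg_word_def)

lemma deg_word_single: "deg_word q [T i j] = (q i + q j) mod 2"
  by (simp add: deg_word_def)

lemma deg_word_zero [simp]: "deg_word (\<lambda>_. 0) w = 0"
proof (induction w)
  case (Cons x w) then show ?case by (cases x) (auto simp: deg_word_Cons)
qed simp

definition pcat :: "(gen list \<times> gen list) \<Rightarrow> (gen list \<times> gen list) \<Rightarrow> (gen list \<times> gen list)" where
  "pcat a b = (fst a @ fst b, snd a @ snd b)"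

definition ssg :: "(nat \<Rightarrow> nat) \<Rightarrow> (gen list \<times> gen list) \<Rightarrow> (gen list \<times> gen list) \<Rightarrow> 'k::field" where
  "ssg q a b = sgn (deg_word q (snd a) * deg_word q (fst b))"

lemma fmul_bil: "fmul x y = bil (@) (\<lambda>_ _. 1) x y"
  by (simp add: fmul_def bil_def)

lemma tens_bil: "tens x y = bil Pair (\<lambda>_ _. 1) x y"
  by (simp add: tens_def bil_def)

lemma stmul_bil: "stmul q x y = bil pcat (ssg q) x y"
  unfolding stmul_def bil_def
  by (rule sum.cong) (auto simp: pcat_def ssg_def)

lemma tmul_bil: "tmul x y = bil pcat (\<lambda>_ _. 1) x y"
  unfolding tmul_def bil_def
  by (rule sum.cong) (auto simp: pcat_def)

lemma ssg_zero: "ssg (\<lambda>_. 0) = (\<lambda>_ _. 1)"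
  by (simp add: fun_eq_iff ssg_def)

lemma tmul_stmul0: "tmul = stmul (\<lambda>_. 0)"
  by (auto simp: fun_eq_iff tmul_bil stmul_bil ssg_zero)

lemma word_single: "word w = Poly_Mapping.single w 1"
  by (simp add: word_def)

lemma fmul_word [simp]: "fmul (word u) (word v) = word (u @ v)"
  by (simp add: fmul_bil word_def bil_single)

lemma tens_word: "tens (word u) (word v) = Poly_Mapping.single (u, v) 1"
  by (simp add: tens_bil word_def bil_single)

lemma fmul_assoc: "fmul (fmul x y) z = fmul x (fmul y z)"
  unfolding fmul_bil by (rule bil_assoc) auto

lemma fone_fmul [simp]: "fmul fone x = x"
  unfolding fmul_bil fone_def word_def by (rule bil_unit1) auto

lemma fmul_fone [simp]: "fmul x fone = x"
  unfolding fmul_bil fone_def word_def by (rule bil_unit2) auto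

lemma pcat_assoc: "pcat (pcat a b) c = pcat a (pcat b c)"
  by (simp add: pcat_def)

lemma ssg_cocycle: "ssg q a b * ssg q (pcat a b) c = (ssg q b c * ssg q a (pcat b c) :: 'k::field)"
proof -
  obtain u v u' v' u'' v'' where ab: "a = (u, v)" "b = (u', v')" "c = (u'', v'')"
    by (metis prod.exhaust)
  let ?dv = "deg_word q v" and ?dv' = "deg_word q v'" and ?du' = "deg_word q u'" and ?du'' = "deg_word q u''"
  have "ssg q a b * ssg q (pcat a b) c = (sgn (?dv * ?du' + (?dv + ?dv') * ?du'') :: 'k)"
    by (simp add: ab ssg_def pcat_def deg_word_append sgn_add[symmetric])
       (rule sgn_parity, simp add: mod_mult_right_eq mod_mult_left_eq even_mult_iff)
  also have "\<dots> = sgn (?dv' * ?du'' + ?dv * (?du' + ?du''))"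
    by (rule arg_cong[where f=sgn]) (simp add: algebra_simps)
  also have "\<dots> = ssg q b c * ssg q a (pcat b c)"
    by (simp add: ab ssg_def pcat_def deg_word_append sgn_add[symmetric])
       (rule sgn_parity, simp add: mod_mult_right_eq mod_mult_left_eq even_mult_iff)
  finally show ?thesis .
qed

lemma stmul_assoc: "stmul q (stmul q x y) z = stmul q x (stmul q y z)"
  unfolding stmul_bil by (rule bil_assoc) (auto simp: pcat_assoc ssg_cocycle)

definition one2 :: "'k::field fa2" where "one2 = Poly_Mapping.single ([], []) 1"

lemma stmul_one1 [simp]: "stmul q one2 x = x"
  unfolding stmul_bil one2_def by (rule bil_unit1) (auto simp: pcat_def ssg_def)

lemma stmul_one2 [simp]: "stmul q x one2 = x"
  unfolding stmul_bil one2_def by (rule bil_unit2) (auto simp: pcat_def ssg_def)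

lemma stmul_single: "stmul q (Poly_Mapping.single (u, v) c) (Poly_Mapping.single (u', v') d)
   = Poly_Mapping.single (u @ u', v @ v') (sgn (deg_word q v * deg_word q u') * c * d)"
  by (simp add: stmul_bil bil_single pcat_def ssg_def)

section \<open>Multiplicativity of linear extensions\<close>

lemma word_eval_Nil [simp]: "word_eval mul one h [] = one"
  by (simp add: word_eval_def)

lemma word_eval_Cons [simp]: "word_eval mul one h (x # w) = mul (h x) (word_eval mul one h w)"
  by (simp add: word_eval_def)

lemma word_eval_append:
  assumes "\<And>a b c. mul (mul a b) c = mul a (mul b c)" "\<And>a. mul one a = a"
  shows "word_eval mul one h (u @ v) = mul (word_eval mul one h u) (word_eval mul one h v)"
  by (induction u) (auto simp: assms)

lemma lin_mult:
  assumes "\<And>u v. E (u @ v) = bil F s (E u) (E v)"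
  shows "lin E (fmul x y) = bil F s (lin E x) (lin E y)"
proof -
  let ?X = "Poly_Mapping.keys x" and ?Y = "Poly_Mapping.keys y"
  have "fmul x y = (\<Sum>a\<in>?X. \<Sum>b\<in>?Y. Poly_Mapping.single (a @ b) (Poly_Mapping.lookup x a * Poly_Mapping.lookup y b))"
    unfolding fmul_bil by (subst bil_superset[where A="?X" and B="?Y"]) auto
  then have "lin E (fmul x y) = (\<Sum>a\<in>?X. \<Sum>b\<in>?Y. scal (Poly_Mapping.lookup x a * Poly_Mapping.lookup y b) (bil F s (E a) (E b)))"
    by (simp add: lin_sum assms)
  also have "\<dots> = bil F s (lin E x) (lin E y)"
    apply (simp add: lin_def bil_sum1 bil_sum2 bil_scal1 bil_scal2 scal_sum2)
    apply (subst (2) sum.swap)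
    apply (simp add: mult.commute)
    done
  finally show ?thesis .
qed

lemma alg_ext_lin: "alg_ext h = lin (word_eval fmul fone h)"
  by (simp add: fun_eq_iff alg_ext_def lin_def)

lemma alg_ext2_lin: "alg_ext2 mul h = lin (word_eval mul (Poly_Mapping.single ([], []) 1) h)"
  by (simp add: fun_eq_iff alg_ext2_def lin_def)

lemma alg_ext_fmul: "alg_ext h (fmul x y) = fmul (alg_ext h x) (alg_ext h y)"
proof -
  have "lin (word_eval fmul fone h) (fmul x y) = bil (@) (\<lambda>_ _. 1) (lin (word_eval fmul fone h) x) (lin (word_eval fmul fone h) y)"
    by (rule lin_mult) (subst word_eval_append, auto simp: fmul_assoc fmul_bil[symmetric])
  then show ?thesis by (simp add: alg_ext_lin fmul_bil[symmetric])
qed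

lemma scop_lin: "scop n q = lin (word_eval (stmul q) one2 (cop_gen n))"
  by (simp add: scop_def alg_ext2_lin one2_def)

lemma scop_fmul: "scop n q (fmul x y) = stmul q (scop n q x) (scop n q y)"
proof -
  have "lin (word_eval (stmul q) one2 (cop_gen n)) (fmul x y) = bil pcat (ssg q) (lin (word_eval (stmul q) one2 (cop_gen n)) x) (lin (word_eval (stmul q) one2 (cop_gen n)) y)"
    by (rule lin_mult) (subst word_eval_append, auto simp: stmul_assoc stmul_bil[symmetric])
  then show ?thesis by (simp add: scop_lin stmul_bil[symmetric])
qed

lemma cop_scop0: "cop n = scop n (\<lambda>_. 0)"
  by (simp add: cop_def scop_def tmul_stmul0)

lemma alg_ext_word: "alg_ext h (word w) = word_eval fmul fone h w"
  by (simp add: alg_ext_lin word_def)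

lemma scop_word: "scop n q (word w) = word_eval (stmul q) one2 (cop_gen n) w"
  by (simp add: scop_lin word_def)

definition link :: "('a \<Rightarrow> 'k::field) \<Rightarrow> ('a \<Rightarrow>\<^sub>0 'k) \<Rightarrow> 'k" where
  "link E x = (\<Sum>w\<in>Poly_Mapping.keys x. Poly_Mapping.lookup x w * E w)"

lemma link_superset:
  assumes "finite A" "Poly_Mapping.keys x \<subseteq> A"
  shows "link E x = (\<Sum>a\<in>A. Poly_Mapping.lookup x a * E a)"
  unfolding link_def
  by (rule sum.mono_neutral_left) (use assms in \<open>auto simp: in_keys_iff\<close>)

lemma link_single [simp]: "link E (Poly_Mapping.single a c) = c * E a"
  by (subst link_superset[where A="{a}"]) auto

lemma link_add: "link E (x + y) = link E x + link E y"
proof -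
  let ?A = "Poly_Mapping.keys x \<union> Poly_Mapping.keys y \<union> Poly_Mapping.keys (x + y)"
  show ?thesis
    by (subst (1 2 3) link_superset[where A="?A"]) (auto simp: lookup_add algebra_simps sum.distrib)
qed

lemma link_zero [simp]: "link E 0 = 0"
  by (simp add: link_def)

lemma link_sum: "link E (sum g I) = (\<Sum>i\<in>I. link E (g i))"
  by (induction I rule: infinite_finite_induct) (auto simp: link_add)

lemma link_scal: "link E (scal c x) = c * link E x"
  by (subst (1 2) link_superset[where A="Poly_Mapping.keys x"]) (auto simp: sum_distrib_left in_keys_iff algebra_simps)

lemma link_minus: "link E (x - y) = link E x - link E y"
  by (metis add_diff_cancel diff_add_cancel link_add)

lemma link_mult:
  assumes "\<And>u v. E (u @ v) = E u * E v"
  shows "link E (fmul x y) = link E x * link E y"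
proof -
  let ?X = "Poly_Mapping.keys x" and ?Y = "Poly_Mapping.keys y"
  have "fmul x y = (\<Sum>a\<in>?X. \<Sum>b\<in>?Y. Poly_Mapping.single (a @ b) (Poly_Mapping.lookup x a * Poly_Mapping.lookup y b))"
    unfolding fmul_bil by (subst bil_superset[where A="?X" and B="?Y"]) auto
  then have "link E (fmul x y) = (\<Sum>a\<in>?X. \<Sum>b\<in>?Y. (Poly_Mapping.lookup x a * Poly_Mapping.lookup y b) * (E a * E b))"
    by (simp add: link_sum assms)
  also have "\<dots> = link E x * link E y"
    by (simp add: link_def sum_product algebra_simps)
  finally show ?thesis .
qed

lemma counit_link: "counit n = link (word_eval (*) 1 (counit_gen n))"
  by (simp add: fun_eq_iff counit_def alg_ext_k_def link_def)

lemma counit_fmul: "counit n (fmul x y) = counit n x * counit n y"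
  unfolding counit_link by (rule link_mult) (simp add: word_eval_append)

lemma counit_word: "counit n (word w) = word_eval (*) 1 (counit_gen n) w"
  by (simp add: counit_link word_def)

lemma fmul_add1: "fmul (x + x') y = fmul x y + fmul x' y" by (simp add: fmul_bil bil_add1)
lemma fmul_add2: "fmul x (y + y') = fmul x y + fmul x y'" by (simp add: fmul_bil bil_add2)
lemma fmul_minus1: "fmul (x - x') y = fmul x y - fmul x' y" by (simp add: fmul_bil bil_minus1)
lemma fmul_minus2: "fmul x (y - y') = fmul x y - fmul x y'" by (simp add: fmul_bil bil_minus2)
lemma fmul_scal1: "fmul (scal c x) y = scal c (fmul x y)" by (simp add: fmul_bil bil_scal1)
lemma fmul_scal2: "fmul x (scal c y) = scal c (fmul x y)" by (simp add: fmul_bil bil_scal2)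
lemma fmul_sum1: "fmul (sum g I) y = (\<Sum>i\<in>I. fmul (g i) y)" by (simp add: fmul_bil bil_sum1)
lemma fmul_sum2: "fmul x (sum g I) = (\<Sum>i\<in>I. fmul x (g i))" by (simp add: fmul_bil bil_sum2)
lemma fmul_zero1 [simp]: "fmul 0 y = 0" by (simp add: fmul_bil)
lemma fmul_zero2 [simp]: "fmul x 0 = 0" by (simp add: fmul_bil)

lemma tens_add1: "tens (x + x') y = tens x y + tens x' y" by (simp add: tens_bil bil_add1)
lemma tens_add2: "tens x (y + y') = tens x y + tens x y'" by (simp add: tens_bil bil_add2)
lemma tens_minus1: "tens (x - x') y = tens x y - tens x' y" by (simp add: tens_bil bil_minus1)
lemma tens_minus2: "tens x (y - y') = tens x y - tens x y'" by (simp add: tens_bil bil_minus2)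
lemma tens_scal1: "tens (scal c x) y = scal c (tens x y)" by (simp add: tens_bil bil_scal1)
lemma tens_scal2: "tens x (scal c y) = scal c (tens x y)" by (simp add: tens_bil bil_scal2)
lemma tens_sum1: "tens (sum g I) y = (\<Sum>i\<in>I. tens (g i) y)" by (simp add: tens_bil bil_sum1)
lemma tens_sum2: "tens x (sum g I) = (\<Sum>i\<in>I. tens x (g i))" by (simp add: tens_bil bil_sum2)
lemma tens_zero1 [simp]: "tens 0 y = 0" by (simp add: tens_bil)
lemma tens_zero2 [simp]: "tens x 0 = 0" by (simp add: tens_bil)

lemma stmul_add1: "stmul q (x + x') y = stmul q x y + stmul q x' y" by (simp add: stmul_bil bil_add1)
lemma stmul_add2: "stmul q x (y + y') = stmul q x y + stmul q x y'" by (simp add: stmul_bil bil_add2)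
lemma stmul_minus1: "stmul q (x - x') y = stmul q x y - stmul q x' y" by (simp add: stmul_bil bil_minus1)
lemma stmul_minus2: "stmul q x (y - y') = stmul q x y - stmul q x y'" by (simp add: stmul_bil bil_minus2)
lemma stmul_scal1: "stmul q (scal c x) y = scal c (stmul q x y)" by (simp add: stmul_bil bil_scal1)
lemma stmul_scal2: "stmul q x (scal c y) = scal c (stmul q x y)" by (simp add: stmul_bil bil_scal2)
lemma stmul_sum1: "stmul q (sum g I) y = (\<Sum>i\<in>I. stmul q (g i) y)" by (simp add: stmul_bil bil_sum1)
lemma stmul_sum2: "stmul q x (sum g I) = (\<Sum>i\<in>I. stmul q x (g i))" by (simp add: stmul_bil bil_sum2)
lemma stmul_zero1 [simp]: "stmul q 0 y = 0" by (simp add: stmul_bil)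
lemma stmul_zero2 [simp]: "stmul q x 0 = 0" by (simp add: stmul_bil)

lemma alg_ext_add: "alg_ext h (x + y) = alg_ext h x + alg_ext h y" by (simp add: alg_ext_lin lin_add)
lemma alg_ext_minus: "alg_ext h (x - y) = alg_ext h x - alg_ext h y" by (simp add: alg_ext_lin lin_minus)
lemma alg_ext_scal: "alg_ext h (scal c x) = scal c (alg_ext h x)" by (simp add: alg_ext_lin lin_scal)
lemma alg_ext_sum: "alg_ext h (sum g I) = (\<Sum>i\<in>I. alg_ext h (g i))" by (simp add: alg_ext_lin lin_sum)
lemma alg_ext_zero [simp]: "alg_ext h 0 = 0" by (simp add: alg_ext_lin)

lemma scop_add: "scop n q (x + y) = scop n q x + scop n q y" by (simp add: scop_lin lin_add)
lemma scop_minus: "scop n q (x - y) = scop n q x - scop n q y" by (simp add: scop_lin lin_minus)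
lemma scop_scal: "scop n q (scal c x) = scal c (scop n q x)" by (simp add: scop_lin lin_scal)
lemma scop_sum: "scop n q (sum g I) = (\<Sum>i\<in>I. scop n q (g i))" by (simp add: scop_lin lin_sum)
lemma scop_zero [simp]: "scop n q 0 = 0" by (simp add: scop_lin)

lemma counit_add: "counit n (x + y) = counit n x + counit n y" by (simp add: counit_link link_add)
lemma counit_minus: "counit n (x - y) = counit n x - counit n y" by (simp add: counit_link link_minus)
lemma counit_scal: "counit n (scal c x) = c * counit n x" by (simp add: counit_link link_scal)
lemma counit_sum: "counit n (sum g I) = (\<Sum>i\<in>I. counit n (g i))" by (simp add: counit_link link_sum)
lemma counit_zero [simp]: "counit n 0 = 0" by (simp add: counit_link)

lemma K_scal: "x \<in> ideal_gen S \<Longrightarrow> scal c x \<in> ideal_gen S"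
proof (induction rule: ideal_gen.induct)
  case zero then show ?case by (simp add: ideal_gen.zero)
next
  case (gen r a b)
  then show ?case using ideal_gen.gen[of r S "scal c a" b] by (simp add: fmul_scal1)
next
  case (add x y) then show ?case by (simp add: scal_add2 ideal_gen.add)
qed

lemma K_uminus: "x \<in> ideal_gen S \<Longrightarrow> - x \<in> ideal_gen S"
  using K_scal[of x S "-1"] by (simp add: scal_uminus1)

lemma K_add: "x \<in> ideal_gen S \<Longrightarrow> y \<in> ideal_gen S \<Longrightarrow> x + y \<in> ideal_gen S"
  by (rule ideal_gen.add)

lemma K_diff: "x \<in> ideal_gen S \<Longrightarrow> y \<in> ideal_gen S \<Longrightarrow> x - y \<in> ideal_gen S"
  using K_add[OF _ K_uminus] by (metis diff_conv_add_uminus)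

lemma K_zero: "0 \<in> ideal_gen S" by (rule ideal_gen.zero)

lemma K_gen: "r \<in> S \<Longrightarrow> r \<in> ideal_gen S"
  using ideal_gen.gen[of r S fone fone] by simp

lemma K_sum: "(\<And>i. i \<in> I \<Longrightarrow> g i \<in> ideal_gen S) \<Longrightarrow> sum g I \<in> ideal_gen S"
  by (induction I rule: infinite_finite_induct) (auto simp: K_zero K_add)

lemma K_mul1: "x \<in> ideal_gen S \<Longrightarrow> fmul a x \<in> ideal_gen S"
proof (induction rule: ideal_gen.induct)
  case zero then show ?case by (simp add: ideal_gen.zero)
next
  case (gen r a' b)
  then show ?case using ideal_gen.gen[of r S "fmul a a'" b] by (simp add: fmul_assoc)
next
  case (add x y) then show ?case by (simp add: fmul_add2 ideal_gen.add)
qed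

lemma K_mul2: "x \<in> ideal_gen S \<Longrightarrow> fmul x b \<in> ideal_gen S"
proof (induction rule: ideal_gen.induct)
  case zero then show ?case by (simp add: ideal_gen.zero)
next
  case (gen r a b')
  then show ?case using ideal_gen.gen[of r S a "fmul b' b"] by (simp add: fmul_assoc)
next
  case (add x y) then show ?case by (simp add: fmul_add1 ideal_gen.add)
qed

lemma K_mono: "x \<in> ideal_gen S \<Longrightarrow> S \<subseteq> S' \<Longrightarrow> x \<in> ideal_gen S'"
proof (induction x rule: ideal_gen.induct)
  case zero then show ?case by (simp add: ideal_gen.zero)
next
  case (gen r a b) then show ?case by (auto intro: ideal_gen.gen)
next
  case (add x y) then show ?case by (simp add: ideal_gen.add)
qed

lemma TI_scal: "x \<in> tens_ideal (ideal_gen S) \<Longrightarrow> scal c x \<in> tens_ideal (ideal_gen S)"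
proof (induction rule: tens_ideal.induct)
  case zero then show ?case by (simp add: tens_ideal.zero)
next
  case (left x b) then show ?case by (metis K_scal tens_ideal.left tens_scal1)
next
  case (right x a) then show ?case by (metis K_scal tens_ideal.right tens_scal2)
next
  case (add x y) then show ?case by (simp add: scal_add2 tens_ideal.add)
qed

lemma TI_uminus: "x \<in> tens_ideal (ideal_gen S) \<Longrightarrow> - x \<in> tens_ideal (ideal_gen S)"
  using TI_scal[of x S "-1"] by (simp add: scal_uminus1)

lemma TI_add: "x \<in> tens_ideal K \<Longrightarrow> y \<in> tens_ideal K \<Longrightarrow> x + y \<in> tens_ideal K"
  by (rule tens_ideal.add)

lemma TI_diff: "x \<in> tens_ideal (ideal_gen S) \<Longrightarrow> y \<in> tens_ideal (ideal_gen S) \<Longrightarrow> x - y \<in> tens_ideal (ideal_gen S)"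
  using TI_add[OF _ TI_uminus] by (metis diff_conv_add_uminus)

lemma TI_zero: "0 \<in> tens_ideal K" by (rule tens_ideal.zero)

lemma TI_sum: "(\<And>i. i \<in> I \<Longrightarrow> g i \<in> tens_ideal K) \<Longrightarrow> sum g I \<in> tens_ideal K"
  by (induction I rule: infinite_finite_induct) (auto simp: TI_zero TI_add)

lemma TI_mono: "y \<in> tens_ideal K \<Longrightarrow> (\<And>x. x \<in> K \<Longrightarrow> x \<in> K') \<Longrightarrow> y \<in> tens_ideal K'"
proof (induction y rule: tens_ideal.induct)
  case zero then show ?case by (simp add: tens_ideal.zero)
next
  case (left x b) then show ?case by (simp add: tens_ideal.left)
next
  case (right x a) then show ?case by (simp add: tens_ideal.right)
next
  case (add x y) then show ?case by (simp add: tens_ideal.add)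
qed


section \<open>Twist (grading automorphism)\<close>

definition tw :: "(nat \<Rightarrow> nat) \<Rightarrow> nat \<Rightarrow> 'k::field fa \<Rightarrow> 'k fa" where
  "tw q m = lin (\<lambda>w. Poly_Mapping.single w (sgn (m * deg_word q w)))"

lemma tw_single [simp]: "tw q m (Poly_Mapping.single w c) = Poly_Mapping.single w (sgn (m * deg_word q w) * c)"
  by (simp add: tw_def mult.commute)

lemma tw_add: "tw q m (x + y) = tw q m x + tw q m y" by (simp add: tw_def lin_add)
lemma tw_scal: "tw q m (scal c x) = scal c (tw q m x)" by (simp add: tw_def lin_scal)
lemma tw_zero [simp]: "tw q m 0 = 0" by (simp add: tw_def)

lemma tw_fmul: "tw q m (fmul x y) = fmul (tw q m x) (tw q m y)"
proof -
  have "lin (\<lambda>w. Poly_Mapping.single w (sgn (m * deg_word q w))) (fmul x y)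
    = bil (@) (\<lambda>_ _. 1) (lin (\<lambda>w. Poly_Mapping.single w (sgn (m * deg_word q w))) x)
                        (lin (\<lambda>w. Poly_Mapping.single w (sgn (m * deg_word q w))) y)"
  proof (rule lin_mult)
    fix u v :: "gen list"
    have "(sgn (m * deg_word q (u @ v)) :: 'a) = sgn (m * deg_word q u) * sgn (m * deg_word q v)"
      by (simp add: deg_word_append sgn_add[symmetric])
         (rule sgn_parity, auto simp add: mod_mult_right_eq even_mult_iff algebra_simps)
    then show "(Poly_Mapping.single (u @ v) (sgn (m * deg_word q (u @ v))) :: 'a fa)
        = bil (@) (\<lambda>_ _. 1) (Poly_Mapping.single u (sgn (m * deg_word q u))) (Poly_Mapping.single v (sgn (m * deg_word q v)))"
      by (simp add: bil_single)
  qed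
  then show ?thesis by (simp add: tw_def fmul_bil)
qed

lemma tw_homog:
  assumes "homogeneous q e r"
  shows "tw q m r = scal (sgn (m * e)) r"
proof -
  have "tw q m r = (\<Sum>w\<in>Poly_Mapping.keys r. scal (Poly_Mapping.lookup r w) (Poly_Mapping.single w (sgn (m * deg_word q w))))"
    by (simp add: tw_def lin_def)
  also have "\<dots> = (\<Sum>w\<in>Poly_Mapping.keys r. scal (sgn (m * e)) (Poly_Mapping.single w (Poly_Mapping.lookup r w)))"
    using assms by (intro sum.cong) (auto simp: homogeneous_def mult.commute)
  also have "\<dots> = scal (sgn (m * e)) (\<Sum>w\<in>Poly_Mapping.keys r. Poly_Mapping.single w (Poly_Mapping.lookup r w))"
    by (simp add: scal_sum2)
  also have "\<dots> = scal (sgn (m * e)) r"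
    by (metis pm_expand_keys)
  finally show ?thesis .
qed

lemma K_tw:
  assumes hom: "\<forall>r\<in>S. \<exists>e. homogeneous q e r"
  shows "x \<in> ideal_gen S \<Longrightarrow> tw q m x \<in> ideal_gen S"
proof (induction rule: ideal_gen.induct)
  case zero then show ?case by (simp add: K_zero)
next
  case (gen r a b)
  obtain e where "homogeneous q e r" using hom gen by blast
  then have "tw q m r = scal (sgn (m * e)) r" by (rule tw_homog)
  then show ?case using gen
    by (simp add: tw_fmul fmul_scal1 fmul_scal2 K_scal ideal_gen.gen)
next
  case (add x y) then show ?case by (simp add: tw_add K_add)
qed

section \<open>Tensor ideal is closed under the (super) tensor product\<close>

lemma fmul_ss [simp]: "fmul (Poly_Mapping.single u c) (Poly_Mapping.single v d) = Poly_Mapping.single (u @ v) (c * d)"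
  by (simp add: fmul_bil bil_single)

lemma tens_ss [simp]: "tens (Poly_Mapping.single u c) (Poly_Mapping.single v d) = Poly_Mapping.single (u, v) (c * d)"
  by (simp add: tens_bil bil_single)

lemma fmul_single2: "fmul x (Poly_Mapping.single w c) = (\<Sum>u\<in>Poly_Mapping.keys x. Poly_Mapping.single (u @ w) (Poly_Mapping.lookup x u * c))"
  by (simp add: fmul_bil bil_single2)

lemma fmul_single1: "fmul (Poly_Mapping.single w c) x = (\<Sum>u\<in>Poly_Mapping.keys x. Poly_Mapping.single (w @ u) (c * Poly_Mapping.lookup x u))"
  by (simp add: fmul_bil bil_single1)

lemma tw_expand: "tw q m x = (\<Sum>u\<in>Poly_Mapping.keys x. Poly_Mapping.single u (sgn (m * deg_word q u) * Poly_Mapping.lookup x u))"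
  by (simp add: tw_def lin_def mult.commute)

lemma tens_expand: "tens x y = (\<Sum>u\<in>Poly_Mapping.keys x. \<Sum>v\<in>Poly_Mapping.keys y. Poly_Mapping.single (u, v) (Poly_Mapping.lookup x u * Poly_Mapping.lookup y v))"
  by (simp add: tens_bil bil_superset[where A="Poly_Mapping.keys x" and B="Poly_Mapping.keys y"])

lemma stmul_tens_single:
  "stmul q (tens x b) (Poly_Mapping.single (u', v') \<beta>)
   = tens (fmul x (word u')) (scal \<beta> (fmul (tw q (deg_word q u') b) (word v')))"
proof -
  have "stmul q (tens x b) (Poly_Mapping.single (u', v') \<beta>) =
    (\<Sum>u\<in>Poly_Mapping.keys x. \<Sum>v\<in>Poly_Mapping.keys b.
       Poly_Mapping.single (u @ u', v @ v') (sgn (deg_word q v * deg_word q u') * (Poly_Mapping.lookup x u * Poly_Mapping.lookup b v) * \<beta>))"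
    by (simp add: tens_expand stmul_sum1 stmul_single)
  also have "\<dots> = tens (fmul x (word u')) (scal \<beta> (fmul (tw q (deg_word q u') b) (word v')))"
    apply (simp only: tw_expand word_single fmul_sum1 fmul_ss)
    apply (simp only: fmul_single2)
    apply (simp add: tens_sum1 tens_sum2 scal_sum2 mult_ac)
    apply (rule sum.swap)
    done
  finally show ?thesis .
qed

lemma stmul_single_tens:
  "stmul q (Poly_Mapping.single (u, v) \<alpha>) (tens x b)
   = tens (scal \<alpha> (fmul (word u) (tw q (deg_word q v) x))) (fmul (word v) b)"
proof -
  have "stmul q (Poly_Mapping.single (u, v) \<alpha>) (tens x b) =
    (\<Sum>u'\<in>Poly_Mapping.keys x. \<Sum>v'\<in>Poly_Mapping.keys b.
       Poly_Mapping.single (u @ u', v @ v') (sgn (deg_word q v * deg_word q u') * \<alpha> * (Poly_Mapping.lookup x u' * Poly_Mapping.lookup b v')))"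
    by (simp add: tens_expand stmul_sum2 stmul_single)
  also have "\<dots> = tens (scal \<alpha> (fmul (word u) (tw q (deg_word q v) x))) (fmul (word v) b)"
    apply (simp only: tw_expand word_single fmul_sum2 fmul_ss)
    apply (simp only: fmul_single1)
    apply (simp add: tens_sum1 tens_sum2 scal_sum2 mult_ac)
    apply (rule sum.swap)
    done
  finally show ?thesis .
qed

lemma stmul_expand2: "stmul q X Y = (\<Sum>k\<in>Poly_Mapping.keys Y. stmul q X (Poly_Mapping.single k (Poly_Mapping.lookup Y k)))"
proof -
  have "stmul q X Y = stmul q X (\<Sum>k\<in>Poly_Mapping.keys Y. Poly_Mapping.single k (Poly_Mapping.lookup Y k))"
    by (metis pm_expand_keys)
  then show ?thesis by (simp add: stmul_sum2)
qed

lemma stmul_expand1: "stmul q X Y = (\<Sum>k\<in>Poly_Mapping.keys X. stmul q (Poly_Mapping.single k (Poly_Mapping.lookup X k)) Y)"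
proof -
  have "stmul q X Y = stmul q (\<Sum>k\<in>Poly_Mapping.keys X. Poly_Mapping.single k (Poly_Mapping.lookup X k)) Y"
    by (metis pm_expand_keys)
  then show ?thesis by (simp add: stmul_sum1)
qed

definition tw_closed :: "(nat \<Rightarrow> nat) \<Rightarrow> 'k::field fa set \<Rightarrow> bool" where
  "tw_closed q K \<longleftrightarrow> (\<forall>x\<in>K. \<forall>m. tw q m x \<in> K)"

lemma tw_closed_ideal: "\<forall>r\<in>S. \<exists>e. homogeneous q e r \<Longrightarrow> tw_closed q (ideal_gen S)"
  using K_tw by (auto simp: tw_closed_def)

lemma TI_stmul_left:
  assumes "X \<in> tens_ideal (ideal_gen S)" "tw_closed q (ideal_gen S)"
  shows "stmul q X Y \<in> tens_ideal (ideal_gen S)"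
  using assms(1)
proof (induction rule: tens_ideal.induct)
  case zero then show ?case by (simp add: TI_zero)
next
  case (left x b)
  show ?case
  proof (subst stmul_expand2, rule TI_sum)
    fix k assume "k \<in> Poly_Mapping.keys Y"
    obtain u' v' where k: "k = (u', v')" by (cases k)
    show "stmul q (tens x b) (Poly_Mapping.single k (Poly_Mapping.lookup Y k)) \<in> tens_ideal (ideal_gen S)"
      unfolding k stmul_tens_single using left by (intro tens_ideal.left K_mul2)
  qed
next
  case (right x a)
  show ?case
  proof (subst stmul_expand2, rule TI_sum)
    fix k assume "k \<in> Poly_Mapping.keys Y"
    obtain u' v' where k: "k = (u', v')" by (cases k)
    show "stmul q (tens a x) (Poly_Mapping.single k (Poly_Mapping.lookup Y k)) \<in> tens_ideal (ideal_gen S)"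
      unfolding k stmul_tens_single using right assms(2)
      by (intro tens_ideal.right K_scal K_mul2) (auto simp: tw_closed_def)
  qed
next
  case (add x y) then show ?case by (simp add: stmul_add1 TI_add)
qed

lemma TI_stmul_right:
  assumes "Y \<in> tens_ideal (ideal_gen S)" "tw_closed q (ideal_gen S)"
  shows "stmul q X Y \<in> tens_ideal (ideal_gen S)"
  using assms(1)
proof (induction rule: tens_ideal.induct)
  case zero then show ?case by (simp add: TI_zero)
next
  case (left x b)
  show ?case
  proof (subst stmul_expand1, rule TI_sum)
    fix k assume "k \<in> Poly_Mapping.keys X"
    obtain u v where k: "k = (u, v)" by (cases k)
    show "stmul q (Poly_Mapping.single k (Poly_Mapping.lookup X k)) (tens x b) \<in> tens_ideal (ideal_gen S)"
      unfolding k stmul_single_tens using left assms(2)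
      by (intro tens_ideal.left K_scal K_mul1) (auto simp: tw_closed_def)
  qed
next
  case (right x a)
  show ?case
  proof (subst stmul_expand1, rule TI_sum)
    fix k assume "k \<in> Poly_Mapping.keys X"
    obtain u v where k: "k = (u, v)" by (cases k)
    show "stmul q (Poly_Mapping.single k (Poly_Mapping.lookup X k)) (tens a x) \<in> tens_ideal (ideal_gen S)"
      unfolding k stmul_single_tens using right by (intro tens_ideal.right K_mul1)
  qed
next
  case (add x y) then show ?case by (simp add: stmul_add2 TI_add)
qed


lemma gn_word: "gn x = word [x]" by (simp add: gn_def)

lemma fmul_gn [simp]: "fmul (gn x) (gn y) = word [x, y]"
  by (simp add: gn_word)

lemma cop_gen_T_in: "i \<in> {1..n} \<Longrightarrow> j \<in> {1..n} \<Longrightarrow>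
  cop_gen n (T i j) = (\<Sum>k\<in>{1..n}. Poly_Mapping.single ([T i k], [T k j]) 1)"
  by (simp add: cop_gen_def gn_word tens_word)

lemma cop_gen_T_out: "\<not> (i \<in> {1..n} \<and> j \<in> {1..n}) \<Longrightarrow> cop_gen n (T i j) = 0"
  unfolding cop_gen_def by (simp only: gen.case if_False)

lemma cop_gen_G: "cop_gen n G = Poly_Mapping.single ([G], [G]) 1"
  by (simp add: cop_gen_def gn_word tens_word)

lemma scop_word1: "scop n q (word [x]) = cop_gen n x"
  by (simp add: scop_word)

lemma scop_word2: "scop n q (word [x, y]) = stmul q (cop_gen n x) (cop_gen n y)"
  by (simp add: scop_word)

lemma scop_Nil: "scop n q (word []) = one2"
  by (simp add: scop_word)

lemma sum4_perm1: "(\<Sum>a\<in>A. \<Sum>b\<in>B. \<Sum>c\<in>C. \<Sum>d\<in>D. F a b c d) = (\<Sum>c\<in>C. \<Sum>d\<in>D. \<Sum>a\<in>A. \<Sum>b\<in>B. F a b c d)"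
proof -
  have "(\<Sum>a\<in>A. \<Sum>b\<in>B. \<Sum>c\<in>C. \<Sum>d\<in>D. F a b c d) = (\<Sum>a\<in>A. \<Sum>c\<in>C. \<Sum>b\<in>B. \<Sum>d\<in>D. F a b c d)"
    by (rule sum.cong[OF refl], rule sum.swap)
  also have "\<dots> = (\<Sum>c\<in>C. \<Sum>a\<in>A. \<Sum>b\<in>B. \<Sum>d\<in>D. F a b c d)"
    by (rule sum.swap)
  also have "\<dots> = (\<Sum>c\<in>C. \<Sum>a\<in>A. \<Sum>d\<in>D. \<Sum>b\<in>B. F a b c d)"
    by (rule sum.cong[OF refl], rule sum.cong[OF refl], rule sum.swap)
  also have "\<dots> = (\<Sum>c\<in>C. \<Sum>d\<in>D. \<Sum>a\<in>A. \<Sum>b\<in>B. F a b c d)"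
    by (rule sum.cong[OF refl], rule sum.swap)
  finally show ?thesis .
qed

lemma sum4_perm2: "(\<Sum>a\<in>A. \<Sum>b\<in>B. \<Sum>c\<in>C. \<Sum>d\<in>D. F a b c d) = (\<Sum>d\<in>D. \<Sum>c\<in>C. \<Sum>a\<in>A. \<Sum>b\<in>B. F a b c d)"
proof -
  have "(\<Sum>a\<in>A. \<Sum>b\<in>B. \<Sum>c\<in>C. \<Sum>d\<in>D. F a b c d) = (\<Sum>c\<in>C. \<Sum>d\<in>D. \<Sum>a\<in>A. \<Sum>b\<in>B. F a b c d)"
    by (rule sum4_perm1)
  also have "\<dots> = (\<Sum>d\<in>D. \<Sum>c\<in>C. \<Sum>a\<in>A. \<Sum>b\<in>B. F a b c d)"
    by (rule sum.swap)
  finally show ?thesis .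
qed

lemma sgn_mul_eq: "even (x + y) = even (u + v) \<Longrightarrow> (sgn x :: 'k::field) * sgn y = sgn u * sgn v"
  unfolding sgn_add[symmetric] by (rule sgn_parity)

lemma coef_rearr: "s1 * s2 = s3 * s4 \<Longrightarrow> s1 * R * s2 = s3 * (s4 * (R::'k::field))"
  by (metis mult.assoc mult.commute)

lemma coef_rearr2: "s1 * s2 = s3 * s4 \<Longrightarrow> s1 * (s2 * R) = s3 * (s4 * (R::'k::field))"
  by (metis mult.assoc)

lemma scop_superFRT:
  assumes "a \<in> {1..n}" "b \<in> {1..n}" "c \<in> {1..n}" "d \<in> {1..n}"
  shows "scop n q (superFRT_rel n q Rx a b c d) =
     (\<Sum>k\<in>{1..n}. \<Sum>l\<in>{1..n}. scal (sgn (q k * q l + q c * q l)) (tens (superFRT_rel n q Rx a b k l) (word [T k c, T l d])))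
   + (\<Sum>k\<in>{1..n}. \<Sum>l\<in>{1..n}. scal (sgn (q k * q a + q k * q l)) (tens (word [T b k, T a l]) (superFRT_rel n q Rx l k c d)))"
proof -
  let ?Q = "{1..n}"
  define A1 where "A1 = (\<Sum>f\<in>?Q. \<Sum>e\<in>?Q. \<Sum>l\<in>?Q. \<Sum>k\<in>?Q.
     Poly_Mapping.single ([T f k, T e l], [T k c, T l d])
      ((sgn (q a * q b + q c * q e) * Rx a f b e * sgn (deg_word q [T k c] * deg_word q [T e l])) :: 'a))"
  define A2 where "A2 = (\<Sum>r\<in>?Q. \<Sum>s\<in>?Q. \<Sum>l\<in>?Q. \<Sum>k\<in>?Q.
     Poly_Mapping.single ([T b k, T a l], [T k r, T l s])
      ((sgn (q c * q d + q r * q a) * Rx s c r d * sgn (deg_word q [T k r] * deg_word q [T a l])) :: 'a))"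
  define B1 where "B1 = (\<Sum>k\<in>?Q. \<Sum>l\<in>?Q. \<Sum>f\<in>?Q. \<Sum>e\<in>?Q.
     Poly_Mapping.single ([T f k, T e l], [T k c, T l d])
      ((sgn (q k * q l + q c * q l) * (sgn (q a * q b + q k * q e) * Rx a f b e)) :: 'a))"
  define B2 where "B2 = (\<Sum>k\<in>?Q. \<Sum>l\<in>?Q. \<Sum>r\<in>?Q. \<Sum>s\<in>?Q.
     Poly_Mapping.single ([T b r, T a s], [T k c, T l d])
      ((sgn (q k * q l + q c * q l) * (sgn (q k * q l + q r * q a) * Rx s k r l)) :: 'a))"
  define C1 where "C1 = (\<Sum>k\<in>?Q. \<Sum>l\<in>?Q. \<Sum>f\<in>?Q. \<Sum>e\<in>?Q.
     Poly_Mapping.single ([T b k, T a l], [T f c, T e d])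
      ((sgn (q k * q a + q k * q l) * (sgn (q l * q k + q c * q e) * Rx l f k e)) :: 'a))"
  define C2 where "C2 = (\<Sum>k\<in>?Q. \<Sum>l\<in>?Q. \<Sum>r\<in>?Q. \<Sum>s\<in>?Q.
     Poly_Mapping.single ([T b k, T a l], [T k r, T l s])
      ((sgn (q k * q a + q k * q l) * (sgn (q c * q d + q r * q l) * Rx s c r d)) :: 'a))"
  have lhs: "scop n q (superFRT_rel n q Rx a b c d) = A1 - A2"
    using assms unfolding A1_def A2_def
    by (simp add: superFRT_rel_def scop_minus scop_sum scop_scal scop_word2 cop_gen_T_in
     stmul_sum1 stmul_sum2 stmul_single scal_sum2)
  have rhs: "(\<Sum>k\<in>{1..n}. \<Sum>l\<in>{1..n}. scal (sgn (q k * q l + q c * q l)) (tens (superFRT_rel n q Rx a b k l) (word [T k c, T l d])))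
   + (\<Sum>k\<in>{1..n}. \<Sum>l\<in>{1..n}. scal (sgn (q k * q a + q k * q l)) (tens (word [T b k, T a l]) (superFRT_rel n q Rx l k c d)))
   = (B1 - B2) + (C1 - C2)"
    using assms unfolding B1_def B2_def C1_def C2_def
    by (simp add: superFRT_rel_def tens_minus1 tens_minus2 tens_sum1 tens_sum2 tens_scal1 tens_scal2 tens_word scal_minus2 scal_sum2 sum_subtractf)
  have c1: "(sgn (q a * q b + q c * q e) * Rx a f b e * sgn (deg_word q [T k c] * deg_word q [T e l]) :: 'a)
      = sgn (q k * q l + q c * q l) * (sgn (q a * q b + q k * q e) * Rx a f b e)" for f e k l
    by (rule coef_rearr, rule sgn_mul_eq) (auto simp: deg_word_single even_add even_mult_iff)
  have c2: "(sgn (q c * q d + q r * q a) * Rx s c r d * sgn (deg_word q [T k r] * deg_word q [T a l]) :: 'a)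
      = sgn (q k * q a + q k * q l) * (sgn (q c * q d + q r * q l) * Rx s c r d)" for r s k l
    by (rule coef_rearr, rule sgn_mul_eq) (auto simp: deg_word_single even_add even_mult_iff)
  have c3: "(sgn (q k * q l + q c * q l) * (sgn (q k * q l + q r * q a) * Rx s k r l) :: 'a)
      = sgn (q r * q a + q r * q s) * (sgn (q s * q r + q c * q l) * Rx s k r l)" for r s k l
    by (rule coef_rearr2, rule sgn_mul_eq) (auto simp: even_add even_mult_iff)
  have "A1 = B1"
    unfolding A1_def B1_def c1 by (rule sum4_perm2)
  moreover have "A2 = C2"
    unfolding A2_def C2_def c2 by (rule sum4_perm2)
  moreover have "B2 = C1"
    unfolding B2_def C1_def c3 by (rule sum4_perm1)
  ultimately show ?thesis using lhs rhs by simp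
qed


lemma counit_word_list: "counit n (word w) = prod_list (map (counit_gen n) w)"
  by (induction w) (simp_all add: counit_word)

lemma scop_GG: "scop n q (word [G, G]) = Poly_Mapping.single ([G, G], [G, G]) 1"
  by (simp add: scop_word2 cop_gen_G stmul_single)

lemma scop_GT: "i \<in> {1..n} \<Longrightarrow> j \<in> {1..n} \<Longrightarrow>
  scop n q (word [G, T i j]) = (\<Sum>k\<in>{1..n}. Poly_Mapping.single ([G, T i k], [G, T k j]) 1)"
  by (simp add: scop_word2 cop_gen_G cop_gen_T_in stmul_sum2 stmul_single)

lemma scop_TG: "i \<in> {1..n} \<Longrightarrow> j \<in> {1..n} \<Longrightarrow>
  scop n q (word [T i j, G]) = (\<Sum>k\<in>{1..n}. Poly_Mapping.single ([T i k, G], [T k j, G]) 1)"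
  by (simp add: scop_word2 cop_gen_G cop_gen_T_in stmul_sum1 stmul_single)

lemma sgn_chain: "(sgn (a + b) :: 'k::field) * sgn (b + c) = sgn (a + c)"
  unfolding sgn_add[symmetric] by (rule sgn_parity) (auto simp: even_add)

definition zrel :: "(nat \<Rightarrow> nat) \<Rightarrow> nat \<Rightarrow> nat \<Rightarrow> 'k::field fa" where
  "zrel p i j = word [G, T i j] - scal (sgn (p i + p j)) (word [T i j, G])"

lemma scop_zrel:
  assumes "i \<in> {1..n}" "j \<in> {1..n}"
  shows "scop n q (zrel p i j) = (\<Sum>k\<in>{1..n}. tens (zrel p i k) (word [G, T k j]))
     + (\<Sum>k\<in>{1..n}. scal (sgn (p i + p k)) (tens (word [T i k, G]) (zrel p k j)))"
proof -
  have "scop n q (zrel p i j) = (\<Sum>k\<in>{1..n}. Poly_Mapping.single ([G, T i k], [G, T k j]) 1)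
     - (\<Sum>k\<in>{1..n}. Poly_Mapping.single ([T i k, G], [T k j, G]) (sgn (p i + p j)))"
    using assms by (simp add: zrel_def scop_minus scop_scal scop_GT scop_TG scal_sum2)
  also have "\<dots> = (\<Sum>k\<in>{1..n}. Poly_Mapping.single ([G, T i k], [G, T k j]) 1 - Poly_Mapping.single ([T i k, G], [G, T k j]) (sgn (p i + p k)))
     + (\<Sum>k\<in>{1..n}. Poly_Mapping.single ([T i k, G], [G, T k j]) (sgn (p i + p k)) - Poly_Mapping.single ([T i k, G], [T k j, G]) (sgn (p i + p k) * sgn (p k + p j)))"
    by (simp add: sgn_chain sum_subtractf)
  also have "\<dots> = (\<Sum>k\<in>{1..n}. tens (zrel p i k) (word [G, T k j]))
     + (\<Sum>k\<in>{1..n}. scal (sgn (p i + p k)) (tens (word [T i k, G]) (zrel p k j)))"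
    by (simp add: zrel_def tens_minus1 tens_minus2 tens_scal1 tens_scal2 tens_word scal_minus2)
  finally show ?thesis .
qed

lemma counit_zrel: "counit n (zrel p i j) = 0"
  by (auto simp: zrel_def counit_minus counit_scal counit_word_list counit_gen_def sgn_def)

lemma sum_delta1:
  assumes "finite Q" "d \<in> Q" "\<And>e. e \<in> Q \<Longrightarrow> R e \<longleftrightarrow> e = d"
  shows "(\<Sum>e\<in>Q. (h e :: 'k::field) * (if R e then 1 else 0)) = h d"
proof -
  have "(\<Sum>e\<in>Q. h e * (if R e then 1 else 0)) = (\<Sum>e\<in>Q. if e = d then h e else 0)"
    using assms by (intro sum.cong) auto
  then show ?thesis using assms by simp
qed

lemma sum2_delta:
  assumes "finite Q" "c \<in> Q" "d \<in> Q" "\<And>f. f \<in> Q \<Longrightarrow> P f \<longleftrightarrow> f = c" "\<And>e. e \<in> Q \<Longrightarrow> R e \<longleftrightarrow> e = d"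
  shows "(\<Sum>f\<in>Q. \<Sum>e\<in>Q. (g f e :: 'k::field) * ((if P f then 1 else 0) * (if R e then 1 else 0))) = g c d"
proof -
  have "(\<Sum>f\<in>Q. \<Sum>e\<in>Q. g f e * ((if P f then 1 else 0) * (if R e then 1 else 0)))
      = (\<Sum>f\<in>Q. (\<Sum>e\<in>Q. g f e * (if R e then 1 else 0)) * (if P f then 1 else 0))"
    apply (rule sum.cong[OF refl])
    apply (subst sum_distrib_right)
    apply (rule sum.cong[OF refl])
    apply (simp only: mult_ac)
    done
  also have "\<dots> = (\<Sum>f\<in>Q. g f d * (if P f then 1 else 0))"
    using assms by (simp add: sum_delta1[where d=d])
  also have "\<dots> = g c d"
    using assms by (intro sum_delta1) auto
  finally show ?thesis .
qed

lemma counit_superFRT: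
  assumes "a \<in> {1..n}" "b \<in> {1..n}" "c \<in> {1..n}" "d \<in> {1..n}"
  shows "counit n (superFRT_rel n q Rx a b c d) = 0"
proof -
  have "counit n (superFRT_rel n q Rx a b c d) =
    (\<Sum>f\<in>{1..n}. \<Sum>e\<in>{1..n}. (sgn (q a * q b + q c * q e) * Rx a f b e) *
       ((if f = c \<and> f \<in> {1..n} then 1 else 0) * (if e = d \<and> e \<in> {1..n} then 1 else 0)))
  - (\<Sum>r\<in>{1..n}. \<Sum>s\<in>{1..n}. (sgn (q c * q d + q r * q a) * Rx s c r d) *
       ((if b = r \<and> b \<in> {1..n} then 1 else 0) * (if a = s \<and> a \<in> {1..n} then 1 else 0)))"
    by (simp add: superFRT_rel_def counit_minus counit_sum counit_scal counit_word_list counit_gen_def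
          del: One_nat_def)
  also have "\<dots> = sgn (q a * q b + q c * q d) * Rx a c b d - sgn (q c * q d + q b * q a) * Rx a c b d"
    using assms by (subst (1 2) sum2_delta) auto
  also have "\<dots> = 0" by (simp add: mult.commute add.commute)
  finally show ?thesis .
qed

lemma zrel_eq: "fmul (gn G) (gn (T i j)) - scal (sgn (p i + p j)) (fmul (gn (T i j)) (gn G)) = zrel p i j"
  by (simp add: zrel_def)

lemma Z2_cases:
  assumes "r \<in> Z2_rels n p"
  obtains "r = word [G, G] - word []"
  | i j where "\<not> (i \<in> {1..n} \<and> j \<in> {1..n})" "r = word [T i j]"
  | i j where "i \<in> {1..n}" "j \<in> {1..n}" "r = zrel p i j"
  using assms unfolding Z2_rels_def by (auto simp: zrel_def[symmetric] fone_def gn_word)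

lemma zrel_in: "i \<in> {1..n} \<Longrightarrow> j \<in> {1..n} \<Longrightarrow> zrel p i j \<in> Z2_rels n p"
  unfolding Z2_rels_def zrel_def by auto

lemma GG_in: "word [G, G] - word [] \<in> Z2_rels n p"
  unfolding Z2_rels_def by (auto simp: fone_def)

lemma gens_ok:
  assumes S_def: "S = {superFRT_rel n q Rx a b c d | a b c d. a \<in> {1..n} \<and> b \<in> {1..n} \<and> c \<in> {1..n} \<and> d \<in> {1..n}} \<union> Z2_rels n p"
    and r: "r \<in> S"
  shows "scop n q r \<in> tens_ideal (ideal_gen S) \<and> counit n r = 0"
proof -
  have FRT_in: "superFRT_rel n q Rx a b c d \<in> ideal_gen S"
    if "a \<in> {1..n}" "b \<in> {1..n}" "c \<in> {1..n}" "d \<in> {1..n}" for a b c d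
    using that by (intro K_gen) (auto simp: S_def)
  have Z_in: "x \<in> ideal_gen S" if "x \<in> Z2_rels n p" for x
    using that by (intro K_gen) (auto simp: S_def)
  show ?thesis
  proof (cases "r \<in> Z2_rels n p")
    case False
    then obtain a b c d where abcd: "a \<in> {1..n}" "b \<in> {1..n}" "c \<in> {1..n}" "d \<in> {1..n}"
      and r_eq: "r = superFRT_rel n q Rx a b c d"
      using r by (auto simp: S_def)
    have "scop n q r \<in> tens_ideal (ideal_gen S)"
      unfolding r_eq scop_superFRT[OF abcd]
      by (intro TI_add TI_sum TI_scal tens_ideal.left tens_ideal.right FRT_in) (use abcd in auto)
    moreover have "counit n r = 0" unfolding r_eq by (rule counit_superFRT[OF abcd])
    ultimately show ?thesis ..
  next
    case True
    then show ?thesis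
    proof (cases rule: Z2_cases)
      case 1
      have "scop n q r = tens (word [G, G] - word []) (word [G, G]) + tens (word []) (word [G, G] - word [])"
        by (simp add: 1 scop_minus scop_GG scop_Nil one2_def tens_minus1 tens_minus2 tens_word)
      then have "scop n q r \<in> tens_ideal (ideal_gen S)"
        using Z_in[OF GG_in] by (simp add: TI_add tens_ideal.left tens_ideal.right)
      moreover have "counit n r = 0" by (simp add: 1 counit_minus counit_word_list counit_gen_def)
      ultimately show ?thesis ..
    next
      case (2 i j)
      have "scop n q r = 0" using 2 by (simp add: scop_word1 cop_gen_T_out)
      moreover have "counit n r = 0" using 2 by (auto simp: counit_word_list counit_gen_def)
      ultimately show ?thesis by (simp add: TI_zero)
    next
      case (3 i j)
      have "scop n q r \<in> tens_ideal (ideal_gen S)"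
        unfolding 3 scop_zrel[OF 3(1,2)]
        by (intro TI_add TI_sum TI_scal tens_ideal.left tens_ideal.right Z_in zrel_in) (use 3 in auto)
      moreover have "counit n r = 0" by (simp add: 3 counit_zrel)
      ultimately show ?thesis ..
    qed
  qed
qed

lemma biideal_generic:
  assumes S_def: "S = {superFRT_rel n q Rx a b c d | a b c d. a \<in> {1..n} \<and> b \<in> {1..n} \<and> c \<in> {1..n} \<and> d \<in> {1..n}} \<union> Z2_rels n p"
    and twc: "tw_closed q (ideal_gen S)"
    and x: "x \<in> ideal_gen S"
  shows "scop n q x \<in> tens_ideal (ideal_gen S) \<and> counit n x = 0"
  using x
proof (induction rule: ideal_gen.induct)
  case zero then show ?case by (simp add: TI_zero)
next
  case (gen r a b)
  have r: "scop n q r \<in> tens_ideal (ideal_gen S) \<and> counit n r = 0"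
    by (rule gens_ok[OF S_def gen])
  have "scop n q (fmul (fmul a r) b) = stmul q (stmul q (scop n q a) (scop n q r)) (scop n q b)"
    by (simp add: scop_fmul)
  also have "\<dots> \<in> tens_ideal (ideal_gen S)"
    using r twc by (intro TI_stmul_left TI_stmul_right) auto
  finally show ?case using r by (simp add: counit_fmul)
next
  case (add x y) then show ?case by (simp add: scop_add counit_add TI_add)
qed


section \<open>The map phi\<close>

fun phiw :: "(nat \<Rightarrow> nat) \<Rightarrow> gen \<Rightarrow> gen list" where
  "phiw p (T i j) = T i j # replicate (p j) G"
| "phiw p G = [G]"

definition Phi :: "(nat \<Rightarrow> nat) \<Rightarrow> gen list \<Rightarrow> gen list" where
  "Phi p w = concat (map (phiw p) w)"

definition phi0 :: "(nat \<Rightarrow> nat) \<Rightarrow> gen \<Rightarrow> 'k::field fa" where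
  "phi0 p x = word (phiw p x)"

lemma Phi_Nil [simp]: "Phi p [] = []" by (simp add: Phi_def)
lemma Phi_Cons [simp]: "Phi p (x # w) = phiw p x @ Phi p w" by (simp add: Phi_def)
lemma Phi_append [simp]: "Phi p (u @ v) = Phi p u @ Phi p v" by (simp add: Phi_def)
lemma Phi_G [simp]: "Phi p (replicate m G) = replicate m G" by (induction m) auto

lemma phi_word: "alg_ext (phi0 p) (word w) = word (Phi p w)"
proof (induction w)
  case Nil then show ?case by (simp add: alg_ext_word fone_def)
next
  case (Cons x w) then show ?case by (simp add: alg_ext_word phi0_def)
qed

lemma phi_lin: "alg_ext (phi0 p) = lin (\<lambda>w. word (Phi p w))"
  by (rule ext, simp add: alg_ext_lin, rule lin_cong) (simp add: alg_ext_word[symmetric] phi_word)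

lemma deg_phiw: "deg_word q (phiw q x) = deg_gen q x mod 2"
  by (cases x) (simp_all add: deg_word_Cons)

lemma deg_Phi [simp]: "deg_word q (Phi q w) = deg_word q w"
  by (induction w) (simp_all add: deg_word_append deg_phiw deg_word_Cons mod_add_left_eq)

section \<open>Congruences modulo the Z2 relations\<close>

locale zctx =
  fixes n :: nat and p :: "nat \<Rightarrow> nat" and S :: "'k::field fa set"
  assumes Z2: "Z2_rels n p \<subseteq> S"
begin

abbreviation K where "K \<equiv> ideal_gen S"

lemma Z_in: "x \<in> Z2_rels n p \<Longrightarrow> x \<in> K"
  using Z2 by (intro K_gen) auto

lemma K_word_ctx: "x \<in> K \<Longrightarrow> fmul (fmul (word A) x) (word B) \<in> K"
  by (intro K_mul1 K_mul2)

lemma K_chain: "x - scal c y \<in> K \<Longrightarrow> y - scal d z \<in> K \<Longrightarrow> x - scal (c * d) z \<in> K"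
proof -
  assume a: "x - scal c y \<in> K" and b: "y - scal d z \<in> K"
  have "x - scal (c * d) z = (x - scal c y) + scal c (y - scal d z)"
    by (simp add: scal_minus2)
  then show ?thesis using a b by (metis K_add K_scal)
qed

lemma word_T_out: "\<not> (i \<in> {1..n} \<and> j \<in> {1..n}) \<Longrightarrow> word (A @ T i j # B) \<in> K"
proof -
  assume "\<not> (i \<in> {1..n} \<and> j \<in> {1..n})"
  then have "word [T i j] \<in> K" by (intro Z_in) (auto simp: Z2_rels_def gn_word)
  from K_word_ctx[OF this, of A B] show ?thesis by simp
qed

lemma GG_ctx: "word (A @ G # G # B) - word (A @ B) \<in> K"
proof -
  have "word [G, G] - word [] \<in> K" by (rule Z_in[OF GG_in])
  from K_word_ctx[OF this, of A B] show ?thesis by (simp add: fmul_minus1 fmul_minus2)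
qed

lemma zrel_ctx: "i \<in> {1..n} \<Longrightarrow> j \<in> {1..n} \<Longrightarrow>
   word (A @ G # T i j # B) - scal (sgn (p i + p j)) (word (A @ T i j # G # B)) \<in> K"
proof -
  assume "i \<in> {1..n}" "j \<in> {1..n}"
  then have "zrel p i j \<in> K" by (intro Z_in zrel_in)
  from K_word_ctx[OF this, of A B] show ?thesis
    by (simp add: zrel_def fmul_minus1 fmul_minus2 fmul_scal1 fmul_scal2)
qed

lemma CL1: "word (A @ G # B) - scal (sgn (deg_word p B)) (word (A @ B @ [G])) \<in> K"
proof (induction B arbitrary: A)
  case Nil then show ?case by (simp add: K_zero)
next
  case (Cons x B)
  show ?case
  proof (cases x)
    case G
    from Cons[of "A @ [G]"] show ?thesis by (simp add: G)
  next
    case (T i j)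
    show ?thesis
    proof (cases "i \<in> {1..n} \<and> j \<in> {1..n}")
      case True
      have a: "word (A @ G # T i j # B) - scal (sgn (p i + p j)) (word (A @ T i j # G # B)) \<in> K"
        using True by (intro zrel_ctx) auto
      have b: "word (A @ T i j # G # B) - scal (sgn (deg_word p B)) (word (A @ T i j # B @ [G])) \<in> K"
        using Cons[of "A @ [T i j]"] by simp
      have s: "(sgn (p i + p j) * sgn (deg_word p B) :: 'k) = sgn (deg_word p (T i j # B))"
        by (simp add: sgn_add[symmetric] deg_word_Cons sgn_mod2) (rule sgn_parity, simp)
      from K_chain[OF a b] show ?thesis by (simp add: T s)
    next
      case False
      then show ?thesis
        using word_T_out[of i j "A @ [G]" B] word_T_out[of i j A "B @ [G]"]
        by (simp add: T K_diff K_scal)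
    qed
  qed
qed

lemma CLm: "word (A @ replicate m G @ B) - scal (sgn (m * deg_word p B)) (word (A @ B @ replicate m G)) \<in> K"
proof (induction m arbitrary: A)
  case 0 then show ?case by (simp add: K_zero)
next
  case (Suc m)
  have a: "word ((A @ [G]) @ replicate m G @ B) - scal (sgn (m * deg_word p B)) (word ((A @ [G]) @ B @ replicate m G)) \<in> K"
    by (rule Suc)
  have b: "word (A @ G # (B @ replicate m G)) - scal (sgn (deg_word p (B @ replicate m G))) (word (A @ (B @ replicate m G) @ [G])) \<in> K"
    by (rule CL1)
  have d: "deg_word p (B @ replicate m G) = deg_word p B"
    by (simp add: deg_word_append deg_word_lt2)
  have s: "(sgn (m * deg_word p B) * sgn (deg_word p B) :: 'k) = sgn (Suc m * deg_word p B)"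
    by (simp add: sgn_add[symmetric] add.commute)
  have "word (A @ replicate (Suc m) G @ B) - scal (sgn (m * deg_word p B) * sgn (deg_word p B)) (word (A @ B @ replicate m G @ [G])) \<in> K"
    using K_chain[OF a[simplified] b[unfolded d]] by simp
  then show ?case by (simp add: s replicate_append_same)
qed

lemma GP0: "word (A @ replicate m G @ B) - word (A @ replicate (m mod 2) G @ B) \<in> K"
proof (induction m rule: nat_less_induct)
  case (1 m)
  show ?case
  proof (cases m)
    case 0 then show ?thesis by (simp add: K_zero)
  next
    case (Suc m1)
    show ?thesis
    proof (cases m1)
      case 0 then show ?thesis using Suc by (simp add: K_zero)
    next
      case (Suc k)
      have "word (A @ replicate m G @ B) - word (A @ replicate k G @ B) \<in> K"
        using GG_ctx[of A "replicate k G @ B"] \<open>m = Suc m1\<close> Suc by simp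
      moreover have "word (A @ replicate k G @ B) - word (A @ replicate (k mod 2) G @ B) \<in> K"
        using 1 \<open>m = Suc m1\<close> Suc by auto
      moreover have "m mod 2 = k mod 2" using \<open>m = Suc m1\<close> Suc by simp
      ultimately show ?thesis using K_add by fastforce
    qed
  qed
qed

lemma GP: "even a = even b \<Longrightarrow> word (A @ replicate a G @ B) - word (A @ replicate b G @ B) \<in> K"
proof -
  assume e: "even a = even b"
  then have "a mod 2 = b mod 2" by (metis even_iff_mod_2_eq_zero odd_iff_mod_2_eq_one)
  then show ?thesis using GP0[of A a B] GP0[of A b B] K_diff by fastforce
qed

end


lemma sgn3R: "even (x + y + z) = even w \<Longrightarrow> (sgn x :: 'k::field) * (sgn y * (sgn z * R)) = R * sgn w"
proof -
  assume e: "even (x + y + z) = even w"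
  have a: "(sgn x :: 'k) * (sgn y * (sgn z * R)) = sgn (x + y + z) * R" by (simp add: sgn_add)
  have "(sgn (x + y + z) :: 'k) = sgn w" by (rule sgn_parity[OF e])
  then have "sgn (x + y + z) * R = sgn w * R" by simp
  then show ?thesis using a by (metis mult.commute)
qed

lemma sgn3R': "even (x + y + z) = even w \<Longrightarrow> (sgn x :: 'k::field) * (sgn y * R) * sgn z = sgn w * R"
  using sgn3R[of x y z w R] by (simp add: mult_ac)

lemma lin_diff_fun: "lin E x - lin E' x = lin (\<lambda>w. E w - E' w) x"
  by (simp add: lin_def sum_subtractf scal_minus2)

context zctx
begin

lemma K_lin: "(\<And>w. E w \<in> K) \<Longrightarrow> lin E x \<in> K"
  unfolding lin_def by (intro K_sum K_scal) auto

lemma P1: "alg_ext (phi0 p) (word [T f c, T e d]) - scal (sgn (p c * (p e + p d))) (word ([T f c, T e d] @ replicate (p c + p d) G)) \<in> K"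
proof -
  have "word ([T f c] @ replicate (p c) G @ (T e d # replicate (p d) G))
     - scal (sgn (p c * deg_word p (T e d # replicate (p d) G))) (word ([T f c] @ (T e d # replicate (p d) G) @ replicate (p c) G)) \<in> K"
    by (rule CLm)
  moreover have "(sgn (p c * deg_word p (T e d # replicate (p d) G)) :: 'k) = sgn (p c * (p e + p d))"
    by (rule sgn_parity) (simp add: deg_word_Cons even_mult_iff)
  moreover have "[T f c] @ (T e d # replicate (p d) G) @ replicate (p c) G = [T f c, T e d] @ replicate (p c + p d) G"
    by (simp add: replicate_add[symmetric] add.commute)
  ultimately show ?thesis by (simp add: phi_word)
qed

lemma phi_rel:
  assumes abcd: "a \<in> {1..n}" "b \<in> {1..n}" "c \<in> {1..n}" "d \<in> {1..n}"
    and hb: "\<And>r s. r \<in> {1..n} \<Longrightarrow> s \<in> {1..n} \<Longrightarrow> \<beta> r s \<noteq> 0 \<Longrightarrow> even (p r + p s) = even (p c + p d)"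
  shows "alg_ext (phi0 p) ((\<Sum>f\<in>{1..n}. \<Sum>e\<in>{1..n}. scal (\<alpha> f e) (word [T f c, T e d]))
        - (\<Sum>r\<in>{1..n}. \<Sum>s\<in>{1..n}. scal (\<beta> r s) (word [T b r, T a s])))
   - fmul ((\<Sum>f\<in>{1..n}. \<Sum>e\<in>{1..n}. scal (\<alpha> f e * sgn (p c * (p e + p d))) (word [T f c, T e d]))
        - (\<Sum>r\<in>{1..n}. \<Sum>s\<in>{1..n}. scal (\<beta> r s * sgn (p r * (p a + p s))) (word [T b r, T a s])))
      (word (replicate (p c + p d) G)) \<in> K"
proof -
  let ?G = "word (replicate (p c + p d) G) :: 'k fa"
  have eq: "alg_ext (phi0 p) ((\<Sum>f\<in>{1..n}. \<Sum>e\<in>{1..n}. scal (\<alpha> f e) (word [T f c, T e d]))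
        - (\<Sum>r\<in>{1..n}. \<Sum>s\<in>{1..n}. scal (\<beta> r s) (word [T b r, T a s])))
   - fmul ((\<Sum>f\<in>{1..n}. \<Sum>e\<in>{1..n}. scal (\<alpha> f e * sgn (p c * (p e + p d))) (word [T f c, T e d]))
        - (\<Sum>r\<in>{1..n}. \<Sum>s\<in>{1..n}. scal (\<beta> r s * sgn (p r * (p a + p s))) (word [T b r, T a s]))) ?G
   = (\<Sum>f\<in>{1..n}. \<Sum>e\<in>{1..n}. scal (\<alpha> f e) (alg_ext (phi0 p) (word [T f c, T e d]) - scal (sgn (p c * (p e + p d))) (fmul (word [T f c, T e d]) ?G)))
     - (\<Sum>r\<in>{1..n}. \<Sum>s\<in>{1..n}. scal (\<beta> r s) (alg_ext (phi0 p) (word [T b r, T a s]) - scal (sgn (p r * (p a + p s))) (fmul (word [T b r, T a s]) ?G)))"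
    by (simp only: alg_ext_minus alg_ext_sum alg_ext_scal fmul_minus1 fmul_sum1 fmul_scal1 scal_minus2 scal_scal sum_subtractf diff_diff_eq diff_add_eq add_diff_eq) (simp add: algebra_simps)
  have t1: "scal (\<alpha> f e) (alg_ext (phi0 p) (word [T f c, T e d]) - scal (sgn (p c * (p e + p d))) (fmul (word [T f c, T e d]) ?G)) \<in> K" for f e
    using P1[of f c e d] by (intro K_scal) simp
  have t2: "scal (\<beta> r s) (alg_ext (phi0 p) (word [T b r, T a s]) - scal (sgn (p r * (p a + p s))) (fmul (word [T b r, T a s]) ?G)) \<in> K"
    if rs: "r \<in> {1..n}" "s \<in> {1..n}" for r s
  proof (cases "\<beta> r s = 0")
    case True then show ?thesis by (simp add: K_zero)
  next
    case False
    have x: "alg_ext (phi0 p) (word [T b r, T a s]) - scal (sgn (p r * (p a + p s))) (word ([T b r, T a s] @ replicate (p r + p s) G)) \<in> K"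
      by (rule P1)
    have y: "word ([T b r, T a s] @ replicate (p r + p s) G) - scal 1 (word ([T b r, T a s] @ replicate (p c + p d) G)) \<in> K"
      using GP[of "p r + p s" "p c + p d" "[T b r, T a s]" "[]"] hb[OF rs False] by simp
    show ?thesis using K_chain[OF x y] by (intro K_scal) simp
  qed
  show ?thesis unfolding eq by (intro K_diff K_sum t1 t2) auto
qed

lemma K_of_diff: "x - y \<in> K \<Longrightarrow> y \<in> K \<Longrightarrow> x \<in> K"
proof -
  assume "x - y \<in> K" "y \<in> K"
  then have "(x - y) + y \<in> K" by (rule K_add)
  then show ?thesis by simp
qed

lemma phi_FRT:
  assumes abcd: "a \<in> {1..n}" "b \<in> {1..n}" "c \<in> {1..n}" "d \<in> {1..n}"
    and sup: "superizable n p R"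
    and inK: "superFRT_rel n p (Rsuper p R) a b c d \<in> K"
  shows "alg_ext (phi0 p) (FRT_rel n R a b c d) \<in> K"
proof -
  have hb: "even (p r + p s) = even (p c + p d)" if "r \<in> {1..n}" "s \<in> {1..n}" "R s c r d \<noteq> 0" for r s
  proof -
    have "\<not> odd (p s + p r + p c + p d)" using sup that abcd unfolding superizable_def by blast
    then show ?thesis by (auto simp: even_add)
  qed
  have X: "(\<Sum>f\<in>{1..n}. \<Sum>e\<in>{1..n}. scal (R a f b e * sgn (p c * (p e + p d))) (word [T f c, T e d]))
        - (\<Sum>r\<in>{1..n}. \<Sum>s\<in>{1..n}. scal (R s c r d * sgn (p r * (p a + p s))) (word [T b r, T a s]))
      = scal (sgn (p c * p d)) (superFRT_rel n p (Rsuper p R) a b c d)"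
    unfolding superFRT_rel_def Rsuper_def scal_minus2 scal_sum2 scal_scal fmul_gn
    by (intro arg_cong2[where f="(-)"] sum.cong refl arg_cong2[where f=scal] sgn3R[symmetric])
       (auto simp: even_add even_mult_iff)
  have "alg_ext (phi0 p) (FRT_rel n R a b c d) - fmul (scal (sgn (p c * p d)) (superFRT_rel n p (Rsuper p R) a b c d)) (word (replicate (p c + p d) G)) \<in> K"
    using phi_rel[OF abcd, of "\<lambda>r s. R s c r d" "\<lambda>f e. R a f b e"] hb
    unfolding X[symmetric] FRT_rel_def fmul_gn by auto
  moreover have "fmul (scal (sgn (p c * p d)) (superFRT_rel n p (Rsuper p R) a b c d)) (word (replicate (p c + p d) G)) \<in> K"
    using inK by (intro K_mul2 K_scal)
  ultimately show ?thesis by (rule K_of_diff)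
qed

lemma phi_superFRT:
  assumes abcd: "a \<in> {1..n}" "b \<in> {1..n}" "c \<in> {1..n}" "d \<in> {1..n}"
    and sup: "superizable n p R"
    and inK: "FRT_rel n R a b c d \<in> K"
  shows "alg_ext (phi0 p) (superFRT_rel n p (Rsuper p R) a b c d) \<in> K"
proof -
  have hb: "even (p r + p s) = even (p c + p d)" if "r \<in> {1..n}" "s \<in> {1..n}" "sgn (p c * p d + p r * p a) * Rsuper p R s c r d \<noteq> 0" for r s
  proof -
    have "R s c r d \<noteq> 0" using that(3) by (auto simp: Rsuper_def)
    then have "\<not> odd (p s + p r + p c + p d)" using sup that abcd unfolding superizable_def by blast
    then show ?thesis by (auto simp: even_add)
  qed
  have X: "(\<Sum>f\<in>{1..n}. \<Sum>e\<in>{1..n}. scal (sgn (p a * p b + p c * p e) * Rsuper p R a f b e * sgn (p c * (p e + p d))) (word [T f c, T e d]))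
        - (\<Sum>r\<in>{1..n}. \<Sum>s\<in>{1..n}. scal (sgn (p c * p d + p r * p a) * Rsuper p R s c r d * sgn (p r * (p a + p s))) (word [T b r, T a s]))
      = scal (sgn (p c * p d)) (FRT_rel n R a b c d)"
    unfolding FRT_rel_def Rsuper_def scal_minus2 scal_sum2 scal_scal fmul_gn
    by (intro arg_cong2[where f="(-)"] sum.cong refl arg_cong2[where f=scal] sgn3R')
       (auto simp: even_add even_mult_iff)
  have "alg_ext (phi0 p) (superFRT_rel n p (Rsuper p R) a b c d) - fmul (scal (sgn (p c * p d)) (FRT_rel n R a b c d)) (word (replicate (p c + p d) G)) \<in> K"
    using phi_rel[OF abcd, of "\<lambda>r s. sgn (p c * p d + p r * p a) * Rsuper p R s c r d" "\<lambda>f e. sgn (p a * p b + p c * p e) * Rsuper p R a f b e"] hb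
    unfolding X[symmetric] superFRT_rel_def fmul_gn by auto
  moreover have "fmul (scal (sgn (p c * p d)) (FRT_rel n R a b c d)) (word (replicate (p c + p d) G)) \<in> K"
    using inK by (intro K_mul2 K_scal)
  ultimately show ?thesis by (rule K_of_diff)
qed

lemma phi_Z2: "r \<in> Z2_rels n p \<Longrightarrow> alg_ext (phi0 p) r \<in> K"
proof (erule Z2_cases)
  assume "r = word [G, G] - word []"
  then show ?thesis using Z_in[OF GG_in] by (simp add: alg_ext_minus phi_word)
next
  fix i j assume "\<not> (i \<in> {1..n} \<and> j \<in> {1..n})" "r = word [T i j]"
  then show ?thesis using word_T_out[of i j "[]"] by (simp add: phi_word)
next
  fix i j assume ij: "i \<in> {1..n}" "j \<in> {1..n}" "r = zrel p i j"
  have m: "fmul (zrel p i j) (word (replicate (p j) G)) \<in> K"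
    using ij by (intro K_mul2 Z_in zrel_in)
  have e: "alg_ext (phi0 p) (zrel p i j) = fmul (zrel p i j) (word (replicate (p j) G))"
    by (simp add: zrel_def alg_ext_minus alg_ext_scal phi_word fmul_minus1 fmul_scal1 replicate_append_same)
  show ?thesis unfolding ij(3) e by (rule m)
qed

end

lemma alg_ext_ideal:
  assumes "\<And>r. r \<in> S \<Longrightarrow> alg_ext h r \<in> ideal_gen S'"
  shows "x \<in> ideal_gen S \<Longrightarrow> alg_ext h x \<in> ideal_gen S'"
proof (induction rule: ideal_gen.induct)
  case zero then show ?case by (simp add: K_zero)
next
  case (gen r a b) then show ?case using assms by (simp add: alg_ext_fmul K_mul1 K_mul2)
next
  case (add x y) then show ?case by (simp add: alg_ext_add K_add)
qed

context zctx
begin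

lemma Phi2: "word (A @ Phi p (Phi p w)) - word (A @ w) \<in> K"
proof (induction w arbitrary: A)
  case Nil then show ?case by (simp add: K_zero)
next
  case (Cons x w)
  show ?case
  proof (cases x)
    case G
    then show ?thesis using Cons[of "A @ [G]"] by simp
  next
    case (T i j)
    have a: "word ((A @ [T i j]) @ replicate (p j + p j) G @ Phi p (Phi p w)) - word ((A @ [T i j]) @ replicate 0 G @ Phi p (Phi p w)) \<in> K"
      by (rule GP) simp
    have b: "word ((A @ [T i j]) @ Phi p (Phi p w)) - word ((A @ [T i j]) @ w) \<in> K"
      by (rule Cons)
    from K_add[OF a b] show ?thesis by (simp add: T replicate_add)
  qed
qed

lemma phi_phi: "alg_ext (phi0 p) (alg_ext (phi0 p) x) - x \<in> K"
proof -
  have "alg_ext (phi0 p) (alg_ext (phi0 p) x) = lin (\<lambda>w. word (Phi p (Phi p w))) x"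
    by (simp add: phi_lin lin_compose word_single)
  moreover have "x = lin (\<lambda>w. word w) x"
    using lin_id[of x] by (simp add: word_single)
  ultimately have "alg_ext (phi0 p) (alg_ext (phi0 p) x) - x = lin (\<lambda>w. word (Phi p (Phi p w)) - word w) x"
    by (metis lin_diff_fun)
  also have "\<dots> \<in> K"
    using Phi2[of "[]"] by (intro K_lin) simp
  finally show ?thesis .
qed

end


lemma pm_induct:
  fixes x :: "'a \<Rightarrow>\<^sub>0 'b::comm_monoid_add"
  assumes "P 0" "\<And>a b. P a \<Longrightarrow> P b \<Longrightarrow> P (a + b)" "\<And>k c. P (Poly_Mapping.single k c)"
  shows "P x"
proof -
  have "P (\<Sum>k\<in>A. Poly_Mapping.single k (Poly_Mapping.lookup x k))" if "finite A" for A
    using that by (induction A rule: finite_induct) (auto simp: assms)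
  then show ?thesis by (metis finite_keys pm_expand_keys)
qed

definition Sw :: "(nat \<Rightarrow> nat) \<Rightarrow> gen list \<times> gen list \<Rightarrow> 'k::field fa2" where
  "Sw p k = Poly_Mapping.single (Phi p (fst k) @ replicate (deg_word p (snd k)) G, Phi p (snd k)) 1"

lemma tens_map_lin: "tens_map f = lin (\<lambda>k. tens (f (word (fst k))) (f (word (snd k))))"
  by (rule ext) (simp add: tens_map_def lin_def case_prod_beta)

lemma superize_lin: "superize_map p = lin (\<lambda>k. Poly_Mapping.single (fst k @ replicate (deg_word p (snd k)) G, snd k) 1)"
  by (rule ext) (simp add: superize_map_def lin_def case_prod_beta)

lemma TM: "tens_map (alg_ext (phi0 p)) (cop_superized n p x) = lin (Sw p) (cop n x)"
  unfolding cop_superized_def tens_map_lin superize_lin lin_compose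
  by (rule lin_cong) (simp add: phi_word tens_word Sw_def word_single[symmetric])

lemma stmul0_single: "stmul (\<lambda>_. 0) (Poly_Mapping.single (u1, v1) c) (Poly_Mapping.single (u2, v2) d) = Poly_Mapping.single (u1 @ u2, v1 @ v2) (c * d)"
  by (simp add: stmul_single)

lemma scop_Cons: "scop n q (word (x # w)) = stmul q (cop_gen n x) (scop n q (word w))"
  by (simp add: scop_word)

lemma scop_Gs: "scop n q (word (replicate m G)) = Poly_Mapping.single (replicate m G, replicate m G) 1"
  by (induction m) (simp_all add: scop_Nil one2_def scop_Cons cop_gen_G stmul_single)

context zctx
begin

lemma MS1: "Sw p (pcat k1 k2) - stmul p (Sw p k1) (Sw p k2) \<in> tens_ideal K"
proof -
  obtain u1 v1 u2 v2 where k: "k1 = (u1, v1)" "k2 = (u2, v2)" by (cases k1, cases k2)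
  let ?P1 = "Phi p u1" and ?P2 = "Phi p u2" and ?Q1 = "Phi p v1" and ?Q2 = "Phi p v2"
  let ?d1 = "deg_word p v1" and ?d2 = "deg_word p v2" and ?d12 = "deg_word p (v1 @ v2)"
  let ?\<sigma> = "sgn (?d1 * deg_word p u2) :: 'k"
  let ?W12 = "word (?P1 @ ?P2 @ replicate ?d12 G) :: 'k fa"
  let ?Ws = "word (?P1 @ ?P2 @ replicate (?d2 + ?d1) G) :: 'k fa"
  let ?L = "word (?P1 @ replicate ?d1 G @ ?P2 @ replicate ?d2 G) :: 'k fa"
  have dP2: "deg_word p (?P2 @ replicate ?d2 G) = deg_word p u2"
    by (simp add: deg_word_append deg_word_lt2)
  have a: "?L - scal ?\<sigma> ?Ws \<in> K"
    using CLm[of ?P1 ?d1 "?P2 @ replicate ?d2 G"] by (simp add: dP2 replicate_add)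
  have b: "?W12 - ?Ws \<in> K"
    using GP[of ?d12 "?d2 + ?d1" "?P1 @ ?P2" "[]"] by (simp add: deg_word_append) blast
  have eq: "?W12 - scal ?\<sigma> ?L = (?W12 - ?Ws) - scal ?\<sigma> (?L - scal ?\<sigma> ?Ws)"
    by (simp add: scal_minus2 sgn_sq)
  have inK: "?W12 - scal ?\<sigma> ?L \<in> K"
    unfolding eq by (rule K_diff[OF b K_scal[OF a]])
  have "Sw p (pcat k1 k2) - stmul p (Sw p k1) (Sw p k2) = tens (?W12 - scal ?\<sigma> ?L) (word (?Q1 @ ?Q2))"
    by (simp add: k Sw_def pcat_def stmul_single tens_minus1 tens_scal1 tens_word dP2 deg_word_append deg_word_lt2)
  then show ?thesis using inK by (simp add: tens_ideal.left)
qed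

lemma MS: "lin (Sw p) (stmul (\<lambda>_. 0) X Y) - stmul p (lin (Sw p) X) (lin (Sw p) Y) \<in> tens_ideal K"
proof (induction X arbitrary: Y rule: pm_induct)
  case 1 then show ?case by (simp add: TI_zero)
next
  case (2 a b)
  have "lin (Sw p) (stmul (\<lambda>_. 0) (a + b) Y) - stmul p (lin (Sw p) (a + b)) (lin (Sw p) Y)
    = (lin (Sw p) (stmul (\<lambda>_. 0) a Y) - stmul p (lin (Sw p) a) (lin (Sw p) Y))
    + (lin (Sw p) (stmul (\<lambda>_. 0) b Y) - stmul p (lin (Sw p) b) (lin (Sw p) Y))"
    by (simp add: stmul_add1 lin_add)
  then show ?case using 2 by (simp add: TI_add)
next
  case (3 k c)
  show ?case
  proof (induction Y rule: pm_induct)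
    case 1 then show ?case by (simp add: TI_zero)
  next
    case (2 a b)
    have "lin (Sw p) (stmul (\<lambda>_. 0) (Poly_Mapping.single k c) (a + b)) - stmul p (lin (Sw p) (Poly_Mapping.single k c)) (lin (Sw p) (a + b))
      = (lin (Sw p) (stmul (\<lambda>_. 0) (Poly_Mapping.single k c) a) - stmul p (lin (Sw p) (Poly_Mapping.single k c)) (lin (Sw p) a))
      + (lin (Sw p) (stmul (\<lambda>_. 0) (Poly_Mapping.single k c) b) - stmul p (lin (Sw p) (Poly_Mapping.single k c)) (lin (Sw p) b))"
      by (simp add: stmul_add2 lin_add)
    then show ?case using 2 by (simp add: TI_add)
  next
    case (3 k' d)
    obtain u1 v1 u2 v2 where k: "k = (u1, v1)" "k' = (u2, v2)" by (cases k, cases k')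
    have "lin (Sw p) (stmul (\<lambda>_. 0) (Poly_Mapping.single k c) (Poly_Mapping.single k' d)) - stmul p (lin (Sw p) (Poly_Mapping.single k c)) (lin (Sw p) (Poly_Mapping.single k' d))
      = scal (c * d) (Sw p (pcat k k') - stmul p (Sw p k) (Sw p k'))"
      by (simp add: k stmul0_single pcat_def scal_minus2 stmul_scal1 stmul_scal2 mult.commute)
    then show ?case using MS1 by (simp add: TI_scal)
  qed
qed

end


lemma cop_word1: "cop n (word [x]) = cop_gen n x"
  by (simp add: cop_scop0 scop_word1)

lemma lin_Sw_sum: "lin (Sw p) (\<Sum>k\<in>A. Poly_Mapping.single (f k) 1) = (\<Sum>k\<in>A. Sw p (f k))"
  by (simp add: lin_sum)

context zctx
begin

lemma D1: "lin (Sw p) (cop n (word [x])) - scop n p (alg_ext (phi0 p) (word [x])) \<in> tens_ideal K"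
proof (cases x)
  case G
  then show ?thesis
    by (simp add: cop_word1 cop_gen_G phi_word scop_word1 Sw_def TI_zero)
next
  case (T i j)
  show ?thesis
  proof (cases "i \<in> {1..n} \<and> j \<in> {1..n}")
    case False
    then show ?thesis
      by (simp add: T cop_word1 cop_gen_T_out phi_word scop_Cons TI_zero)
  next
    case True
    let ?A = "\<lambda>k. T i k # replicate (p k) G @ replicate (deg_word p [T k j]) G"
    let ?A' = "\<lambda>k. T i k # replicate (p j) G"
    let ?B = "\<lambda>k. T k j # replicate (p j) G"
    have "lin (Sw p) (cop n (word [x])) - scop n p (alg_ext (phi0 p) (word [x]))
       = (\<Sum>k\<in>{1..n}. tens (word (?A k) - word (?A' k)) (word (?B k)))"
      using True
      by (simp add: T cop_word1 cop_gen_T_in phi_word scop_Cons scop_Gs lin_sum Sw_def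
            stmul_sum1 stmul_single tens_minus1 tens_word sum_subtractf)
    also have "\<dots> \<in> tens_ideal K"
    proof (intro TI_sum tens_ideal.left)
      fix k
      have "word ([T i k] @ replicate (p k + deg_word p [T k j]) G @ []) - word ([T i k] @ replicate (p j) G @ []) \<in> K"
        by (rule GP) (simp add: deg_word_single even_add, blast)
      then show "word (?A k) - word (?A' k) \<in> K" by (simp add: replicate_add)
    qed
    finally show ?thesis .
  qed
qed

lemma Dw:
  assumes twc: "tw_closed p K"
  shows "lin (Sw p) (cop n (word w)) - scop n p (alg_ext (phi0 p) (word w)) \<in> tens_ideal K"
proof (induction w)
  case Nil
  then show ?case
    by (simp add: cop_scop0 scop_Nil phi_word one2_def Sw_def TI_zero)
next
  case (Cons x w)
  let ?X = "cop n (word [x])" and ?Y = "cop n (word w)"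
  let ?U = "scop n p (alg_ext (phi0 p) (word [x]))" and ?V = "scop n p (alg_ext (phi0 p) (word w))"
  have w: "word (x # w) = fmul (word [x]) (word w)" by simp
  have e: "lin (Sw p) (cop n (word (x # w))) - scop n p (alg_ext (phi0 p) (word (x # w)))
    = (lin (Sw p) (stmul (\<lambda>_. 0) ?X ?Y) - stmul p (lin (Sw p) ?X) (lin (Sw p) ?Y))
      + stmul p (lin (Sw p) ?X - ?U) (lin (Sw p) ?Y) + stmul p ?U (lin (Sw p) ?Y - ?V)"
    unfolding w by (simp add: alg_ext_fmul scop_fmul cop_scop0 stmul_minus1 stmul_minus2 del: fmul_word)
  show ?case unfolding e
    by (intro TI_add MS TI_stmul_left[OF D1 twc] TI_stmul_right[OF Cons twc])
qed

lemma Dall: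
  assumes twc: "tw_closed p K"
  shows "tens_map (alg_ext (phi0 p)) (cop_superized n p x) - scop n p (alg_ext (phi0 p) x) \<in> tens_ideal K"
  unfolding TM
proof (induction x rule: pm_induct)
  case 1 then show ?case by (simp add: cop_scop0 TI_zero)
next
  case (2 a b)
  have "lin (Sw p) (cop n (a + b)) - scop n p (alg_ext (phi0 p) (a + b))
     = (lin (Sw p) (cop n a) - scop n p (alg_ext (phi0 p) a)) + (lin (Sw p) (cop n b) - scop n p (alg_ext (phi0 p) b))"
    by (simp add: cop_scop0 scop_add lin_add alg_ext_add)
  then show ?case using 2 by (simp add: TI_add)
next
  case (3 w c)
  have s: "Poly_Mapping.single w c = scal c (word w)" by (simp add: word_single)
  have "lin (Sw p) (cop n (Poly_Mapping.single w c)) - scop n p (alg_ext (phi0 p) (Poly_Mapping.single w c))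
     = scal c (lin (Sw p) (cop n (word w)) - scop n p (alg_ext (phi0 p) (word w)))"
    unfolding s by (simp add: cop_scop0 scop_scal lin_scal alg_ext_scal scal_minus2)
  then show ?case using Dw[OF twc] by (simp add: TI_scal)
qed

end

lemma counit_Phi: "counit n (word (Phi p w)) = counit n (word w)"
proof -
  have "prod_list (map (counit_gen n) (Phi p w)) = prod_list (map (counit_gen n) w)"
  proof (induction w)
    case (Cons x w)
    have g: "prod_list (map (counit_gen n) (replicate m G)) = 1" for m
      by (induction m) (simp_all add: counit_gen_def)
    show ?case using Cons by (cases x) (simp_all add: g counit_gen_def)
  qed simp
  then show ?thesis by (simp add: counit_word_list)
qed

lemma counit_phi: "counit n (alg_ext (phi0 p) x) = counit n x"
proof (induction x rule: pm_induct)
  case 1 then show ?case by simp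
next
  case (2 a b) then show ?case by (simp add: alg_ext_add counit_add)
next
  case (3 w c)
  have s: "Poly_Mapping.single w c = scal c (word w)" by (simp add: word_single)
  show ?case unfolding s by (simp add: alg_ext_scal counit_scal phi_word counit_Phi)
qed


lemma homog_iff: "homogeneous q e x \<longleftrightarrow> (\<forall>w. deg_word q w \<noteq> e \<longrightarrow> Poly_Mapping.lookup x w = 0)"
  by (auto simp: homogeneous_def in_keys_iff)

lemma homog_word: "deg_word q w = e \<Longrightarrow> homogeneous q e (word w)"
  by (auto simp: homog_iff word_single lookup_single when_def)

lemma homog_diff: "homogeneous q e x \<Longrightarrow> homogeneous q e y \<Longrightarrow> homogeneous q e (x - y)"
  by (auto simp: homog_iff lookup_minus)

lemma homog_scal: "homogeneous q e x \<Longrightarrow> homogeneous q e (scal c x)"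
  by (auto simp: homog_iff)

lemma homog_scal0: "homogeneous q e (scal 0 x)"
  by (auto simp: homog_iff)

lemma homog_zero: "homogeneous q e 0"
  by (auto simp: homog_iff)

lemma homog_sum: "(\<And>i. i \<in> A \<Longrightarrow> homogeneous q e (f i)) \<Longrightarrow> homogeneous q e (sum f A)"
  by (auto simp: homog_iff lookup_sum intro!: sum.neutral)

lemma deg_word_pair: "deg_word q [T a b, T c d] = (q a + q b + q c + q d) mod 2"
  by (simp add: deg_word_def mod_add_eq add.assoc)

lemma homog_superFRT:
  assumes sup: "superizable n p R" and abcd: "a \<in> {1..n}" "b \<in> {1..n}" "c \<in> {1..n}" "d \<in> {1..n}"
  shows "homogeneous p ((p a + p b + p c + p d) mod 2) (superFRT_rel n p (Rsuper p R) a b c d)"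
  unfolding superFRT_rel_def fmul_gn
proof (intro homog_diff homog_sum)
  fix f e assume fe: "f \<in> {1..n}" "e \<in> {1..n}"
  show "homogeneous p ((p a + p b + p c + p d) mod 2) (scal (sgn (p a * p b + p c * p e) * Rsuper p R a f b e) (word [T f c, T e d]))"
  proof (cases "R a f b e = 0")
    case True then show ?thesis by (simp add: Rsuper_def homog_zero)
  next
    case False
    then have "\<not> odd (p a + p b + p f + p e)" using sup fe abcd unfolding superizable_def by blast
    then have "deg_word p [T f c, T e d] = (p a + p b + p c + p d) mod 2"
      unfolding deg_word_pair by (auto simp: even_add mod2_eq_if)
    then show ?thesis by (intro homog_scal homog_word)
  qed
next
  fix r s assume rs: "r \<in> {1..n}" "s \<in> {1..n}"
  show "homogeneous p ((p a + p b + p c + p d) mod 2) (scal (sgn (p c * p d + p r * p a) * Rsuper p R s c r d) (word [T b r, T a s]))"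
  proof (cases "R s c r d = 0")
    case True then show ?thesis by (simp add: Rsuper_def homog_zero)
  next
    case False
    then have "\<not> odd (p s + p r + p c + p d)" using sup rs abcd unfolding superizable_def by blast
    then have "deg_word p [T b r, T a s] = (p a + p b + p c + p d) mod 2"
      unfolding deg_word_pair by (auto simp: even_add mod2_eq_if)
    then show ?thesis by (intro homog_scal homog_word)
  qed
qed

lemma homog_Z2: "r \<in> Z2_rels n p \<Longrightarrow> \<exists>e. homogeneous p e r"
proof (erule Z2_cases)
  assume "r = word [G, G] - word []"
  then show ?thesis by (auto intro!: homog_diff homog_word simp: deg_word_def)
next
  fix i j assume "r = word [T i j]"
  then show ?thesis using homog_word by blast
next
  fix i j assume r: "r = zrel p i j"
  have "homogeneous p ((p i + p j) mod 2) r"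
    unfolding r zrel_def by (intro homog_diff homog_scal homog_word) (simp_all add: deg_word_def)
  then show ?thesis by blast
qed

lemma superFRT0: "superFRT_rel n (\<lambda>_. 0) R a b c d = FRT_rel n R a b c d"
  by (simp add: superFRT_rel_def FRT_rel_def)

lemma AR_as_super: "AR_Z2_rels n p R = {superFRT_rel n (\<lambda>_. 0) R a b c d | a b c d. a \<in> {1..n} \<and> b \<in> {1..n} \<and> c \<in> {1..n} \<and> d \<in> {1..n}} \<union> Z2_rels n p"
  by (simp add: AR_Z2_rels_def superFRT0)

lemma tw0: "tw (\<lambda>_. 0) m x = x"
  using lin_id[of x] by (simp add: tw_def)

theorem mainTheorem6:
  fixes n :: nat and p :: "nat \<Rightarrow> nat" and R :: "nat \<Rightarrow> nat \<Rightarrow> nat \<Rightarrow> nat \<Rightarrow> 'k::field"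
  assumes p01: "\<forall>i\<in>{1..n}. p i \<in> {0, 1}"
    and qybe: "QYBE n R"
    and sup: "superizable n p R"
  shows "is_bialgebra_presented n (ideal_gen (AR_Z2_rels n p R))
       \<and> is_super_bialgebra_presented n p (ideal_gen (superAR_Z2_rels n p (Rsuper p R)))
       \<and> (\<exists>phi0. super_bialg_iso n p (ideal_gen (AR_Z2_rels n p R))
                   (ideal_gen (superAR_Z2_rels n p (Rsuper p R))) phi0)"
proof -
  let ?SA = "AR_Z2_rels n p R" and ?SB = "superAR_Z2_rels n p (Rsuper p R)"
  let ?I = "ideal_gen ?SA" and ?J = "ideal_gen ?SB"
  have zA: "zctx n p ?SA" by unfold_locales (auto simp: AR_Z2_rels_def)
  have zB: "zctx n p ?SB" by unfold_locales (auto simp: superAR_Z2_rels_def)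
  have twA: "tw_closed (\<lambda>_. 0) ?I" by (simp add: tw_closed_def tw0)
  have homB: "\<forall>r\<in>?SB. \<exists>e. homogeneous p e r"
    unfolding superAR_Z2_rels_def using homog_superFRT[OF sup] homog_Z2 by blast
  have twB: "tw_closed p ?J" by (rule tw_closed_ideal[OF homB])
  have part1: "is_bialgebra_presented n ?I"
    unfolding is_bialgebra_presented_def cop_scop0
    using biideal_generic[OF AR_as_super[of n p R] twA] by blast
  have part2: "is_super_bialgebra_presented n p ?J"
    unfolding is_super_bialgebra_presented_def
    using biideal_generic[OF superAR_Z2_rels_def twB] by blast
  let ?phi = "alg_ext (phi0 p) :: 'k fa \<Rightarrow> 'k fa"
  have phiIJ: "?phi x \<in> ?J" if "x \<in> ?I" for x
  proof (rule alg_ext_ideal[OF _ that])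
    fix r assume "r \<in> ?SA"
    then show "?phi r \<in> ?J"
    proof (cases "r \<in> Z2_rels n p")
      case True then show ?thesis by (rule zctx.phi_Z2[OF zB])
    next
      case False
      then obtain a b c d where abcd: "a \<in> {1..n}" "b \<in> {1..n}" "c \<in> {1..n}" "d \<in> {1..n}"
        and r: "r = FRT_rel n R a b c d"
        using \<open>r \<in> ?SA\<close> by (auto simp: AR_Z2_rels_def)
      have "superFRT_rel n p (Rsuper p R) a b c d \<in> ?J"
        using abcd by (intro K_gen) (auto simp: superAR_Z2_rels_def)
      then show ?thesis unfolding r by (rule zctx.phi_FRT[OF zB abcd sup])
    qed
  qed
  have phiJI: "?phi y \<in> ?I" if "y \<in> ?J" for y
  proof (rule alg_ext_ideal[OF _ that])
    fix r assume "r \<in> ?SB"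
    then show "?phi r \<in> ?I"
    proof (cases "r \<in> Z2_rels n p")
      case True then show ?thesis by (rule zctx.phi_Z2[OF zA])
    next
      case False
      then obtain a b c d where abcd: "a \<in> {1..n}" "b \<in> {1..n}" "c \<in> {1..n}" "d \<in> {1..n}"
        and r: "r = superFRT_rel n p (Rsuper p R) a b c d"
        using \<open>r \<in> ?SB\<close> by (auto simp: superAR_Z2_rels_def)
      have "FRT_rel n R a b c d \<in> ?I"
        using abcd by (intro K_gen) (auto simp: AR_Z2_rels_def)
      then show ?thesis unfolding r by (rule zctx.phi_superFRT[OF zA abcd sup])
    qed
  qed
  have iso: "super_bialg_iso n p ?I ?J (phi0 p)"
    unfolding super_bialg_iso_def Let_def
  proof (intro conjI ballI allI exI[where x="phi0 p"])
    show "\<And>x. x \<in> ?I \<Longrightarrow> ?phi x \<in> ?J" by (rule phiIJ)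
    show "\<And>y. y \<in> ?J \<Longrightarrow> ?phi y \<in> ?I" by (rule phiJI)
    show "\<And>x. ?phi (?phi x) - x \<in> ?I" by (rule zctx.phi_phi[OF zA])
    show "\<And>y. ?phi (?phi y) - y \<in> ?J" by (rule zctx.phi_phi[OF zB])
    show "\<exists>v. homogeneous p (deg_word p w) v \<and> ?phi (word w) - v \<in> ?J" for w
      by (rule exI[of _ "word (Phi p w)"]) (simp add: phi_word homog_word K_zero)
    show "\<And>x. tens_map ?phi (cop_superized n p x) - scop n p (?phi x) \<in> tens_ideal ?J"
      by (rule zctx.Dall[OF zB twB])
    show "\<And>x. counit n (?phi x) = counit n x" by (rule counit_phi)
  qed
  show ?thesis using part1 part2 iso by blast
qed


end
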